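(* Let $G$ be a finite solvable group and suppose given integers $n(H,\phi)$ for all pairs $(H,\phi)$ with $H$ a subgroup of $G$ and $\phi$ a character of $H$, satisfying: (ACH1) $n(H,\phi_1+\phi_2)=n(H,\phi_1)+n(H,\phi_2)$ for all characters $\phi_1,\phi_2$ of $H$; (ACH2) $n(G,\mathrm{Ind}_H^G\phi)=n(H,\phi)$ for every subgroup $H$ and every character $\phi$ of $H$; (ACH3) $n(H,\phi)\ge0$ for every subgroup $H$ and every one-dimensional character $\phi$ of $H$. Let $H$ be a subgroup of $G$, $\chi$ a one-dimensional character of $G$ and $\phi$ a one-dimensional character of $H$. Then \[n(G,\mathrm{Ind}_H^G\phi)\ge(\chi|_H,\phi)\,n(G,\chi).\]
   Context: $(\cdot,\cdot)$ is the standard inner product of class functions, $(f_1,f_2)=\frac1{|H|}\sum_{h\in H}f_1(h)\overline{f_2(h)}$. $\mathrm{Ind}_H^G$ denotes induction of characters; a one-dimensional character is a character of degree $1$. *)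

theory Defs
  imports "HOL-Algebra.Solvable_Groups" "Jordan_Normal_Form.Matrix"
begin

definition mat_trace :: "complex mat \<Rightarrow> complex" where
  "mat_trace A = (\<Sum>i<dim_row A. A $$ (i, i))"

text \<open>A (complex) character of the subgroup H of G: the trace of a finite-dimensional
  complex matrix representation of H (dimension 0 allowed), extended by 0 outside H.\<close>
definition is_character :: "('a, 'b) monoid_scheme \<Rightarrow> 'a set \<Rightarrow> ('a \<Rightarrow> complex) \<Rightarrow> bool" where
  "is_character G H \<phi> \<longleftrightarrow>
     (\<exists>(d::nat) (\<rho>::'a \<Rightarrow> complex mat).
        (\<forall>h\<in>H. \<rho> h \<in> carrier_mat d d) \<and>
        \<rho> \<one>\<^bsub>G\<^esub> = 1\<^sub>m d \<and>
        (\<forall>g\<in>H. \<forall>h\<in>H. \<rho> (g \<otimes>\<^bsub>G\<^esub> h) = \<rho> g * \<rho> h) \<and>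
        (\<forall>h. \<phi> h = (if h \<in> H then mat_trace (\<rho> h) else 0)))"

definition is_linear_character :: "('a, 'b) monoid_scheme \<Rightarrow> 'a set \<Rightarrow> ('a \<Rightarrow> complex) \<Rightarrow> bool" where
  "is_linear_character G H \<phi> \<longleftrightarrow> is_character G H \<phi> \<and> \<phi> \<one>\<^bsub>G\<^esub> = 1"

definition induce :: "('a, 'b) monoid_scheme \<Rightarrow> 'a set \<Rightarrow> ('a \<Rightarrow> complex) \<Rightarrow> 'a \<Rightarrow> complex" where
  "induce G H \<phi> g =
     (if g \<in> carrier G then
        (1 / of_nat (card H)) *
          (\<Sum>x\<in>carrier G. (let y = x \<otimes>\<^bsub>G\<^esub> g \<otimes>\<^bsub>G\<^esub> inv\<^bsub>G\<^esub> x in if y \<in> H then \<phi> y else 0))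
      else 0)"

definition restrict_char :: "'a set \<Rightarrow> ('a \<Rightarrow> complex) \<Rightarrow> 'a \<Rightarrow> complex" where
  "restrict_char H \<chi> h = (if h \<in> H then \<chi> h else 0)"

definition char_inner :: "'a set \<Rightarrow> ('a \<Rightarrow> complex) \<Rightarrow> ('a \<Rightarrow> complex) \<Rightarrow> complex" where
  "char_inner H f1 f2 = (1 / of_nat (card H)) * (\<Sum>h\<in>H. f1 h * cnj (f2 h))"

end

theory Submission
  imports Defs "HOL-Algebra.Multiplicative_Group"
begin

lemma mat_trace_one[simp]: "mat_trace (1\<^sub>m d) = of_nat d" unfolding mat_trace_def by simp

lemma char_zero: "is_character G K (\<lambda>_. 0)"
  unfolding is_character_def
  by (rule exI[of _ 0], rule exI[of _ "\<lambda>_. 1\<^sub>m 0"]) (auto simp: mat_trace_def)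

lemma sum_lessThan_add_split: "(\<Sum>i<a+(b::nat). f i) = (\<Sum>i<a. f i) + (\<Sum>i<b. f (a+i))"
  by (induction b) (auto simp: add.assoc)

lemma mat_trace_four_block:
  assumes "A \<in> carrier_mat d1 d1" "D \<in> carrier_mat d2 d2"
  shows "mat_trace (four_block_mat A B C D) = mat_trace A + mat_trace D"
proof -
  have "mat_trace (four_block_mat A B C D) = (\<Sum>i<d1+d2. four_block_mat A B C D $$ (i,i))"
    using assms unfolding mat_trace_def by simp
  also have "\<dots> = (\<Sum>i<d1. four_block_mat A B C D $$ (i,i)) + (\<Sum>i<d2. four_block_mat A B C D $$ (d1+i,d1+i))"
    by (simp add: sum_lessThan_add_split)
  also have "\<dots> = mat_trace A + mat_trace D"
    using assms unfolding mat_trace_def by simp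
  finally show ?thesis .
qed

lemma char_add:
  assumes "is_character G K f1" "is_character G K f2"
  shows "is_character G K (\<lambda>x. f1 x + f2 x)"
proof -
  obtain d1 r1 where r1: "\<forall>h\<in>K. r1 h \<in> carrier_mat d1 d1" "r1 \<one>\<^bsub>G\<^esub> = 1\<^sub>m d1"
    "\<forall>g\<in>K. \<forall>h\<in>K. r1 (g \<otimes>\<^bsub>G\<^esub> h) = r1 g * r1 h"
    "\<forall>h. f1 h = (if h \<in> K then mat_trace (r1 h) else 0)"
    using assms(1) unfolding is_character_def by blast
  obtain d2 r2 where r2: "\<forall>h\<in>K. r2 h \<in> carrier_mat d2 d2" "r2 \<one>\<^bsub>G\<^esub> = 1\<^sub>m d2"
    "\<forall>g\<in>K. \<forall>h\<in>K. r2 (g \<otimes>\<^bsub>G\<^esub> h) = r2 g * r2 h"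
    "\<forall>h. f2 h = (if h \<in> K then mat_trace (r2 h) else 0)"
    using assms(2) unfolding is_character_def by blast
  define r where "r = (\<lambda>h. four_block_mat (r1 h) (0\<^sub>m d1 d2) (0\<^sub>m d2 d1) (r2 h))"
  show ?thesis unfolding is_character_def
  proof (intro exI[of _ "d1+d2"] exI[of _ r] conjI ballI allI)
    fix h assume "h \<in> K" thus "r h \<in> carrier_mat (d1+d2) (d1+d2)"
      using r1 r2 unfolding r_def by auto
  next
    show "r \<one>\<^bsub>G\<^esub> = 1\<^sub>m (d1+d2)" unfolding r_def using r1 r2 by simp
  next
    fix g h assume gh: "g \<in> K" "h \<in> K"
    have c: "r1 g \<in> carrier_mat d1 d1" "r1 h \<in> carrier_mat d1 d1"
        "r2 g \<in> carrier_mat d2 d2" "r2 h \<in> carrier_mat d2 d2" using gh r1 r2 by auto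
    show "r (g \<otimes>\<^bsub>G\<^esub> h) = r g * r h"
      unfolding r_def using gh r1 r2 c
      by (simp add: mult_four_block_mat[OF c(1) _ _ c(3) c(2) _ _ c(4)] c
           left_mult_zero_mat[OF c(4)] right_mult_zero_mat[OF c(1)] left_mult_zero_mat[OF c(2)] right_mult_zero_mat[OF c(3)]
           right_add_zero_mat[OF mult_carrier_mat[OF c(1) c(2)]] left_add_zero_mat[OF mult_carrier_mat[OF c(3) c(4)]])
  next
    fix h show "f1 h + f2 h = (if h \<in> K then mat_trace (r h) else 0)"
      using r1 r2 unfolding r_def by (auto intro!: mat_trace_four_block[symmetric])
  qed
qed

lemma n_sum:
  fixes n :: "'a set \<Rightarrow> ('a \<Rightarrow> complex) \<Rightarrow> int"
  assumes ACH1: "\<And>\<phi>1 \<phi>2. is_character G K \<phi>1 \<Longrightarrow> is_character G K \<phi>2 \<Longrightarrow>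
                 n K (\<lambda>x. \<phi>1 x + \<phi>2 x) = n K \<phi>1 + n K \<phi>2"
    and "finite I" and "\<And>i. i \<in> I \<Longrightarrow> is_character G K (f i)"
  shows "is_character G K (\<lambda>x. \<Sum>i\<in>I. f i x) \<and> n K (\<lambda>x. \<Sum>i\<in>I. f i x) = (\<Sum>i\<in>I. n K (f i))"
  using assms(2,3)
proof (induction I rule: finite_induct)
  case empty
  have "n K (\<lambda>x. 0 + 0) = n K (\<lambda>_. 0) + n K (\<lambda>_. 0)" using ACH1[OF char_zero char_zero] .
  then have "n K (\<lambda>_. 0) = n K (\<lambda>_. 0) + n K (\<lambda>_. 0)" by simp
  then have "n K (\<lambda>_. 0) = 0" by linarith
  then show ?case using char_zero[of G K] by simp
next
  case (insert i I)
  have c: "is_character G K (\<lambda>x. \<Sum>i\<in>I. f i x)" and e: "n K (\<lambda>x. \<Sum>i\<in>I. f i x) = (\<Sum>i\<in>I. n K (f i))"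
    using insert by auto
  have fi: "is_character G K (f i)" using insert by auto
  show ?case using insert(1,2) char_add[OF fi c] ACH1[OF fi c] e by simp
qed

lemma n_mult:
  fixes n :: "'a set \<Rightarrow> ('a \<Rightarrow> complex) \<Rightarrow> int"
  assumes ACH1: "\<And>\<phi>1 \<phi>2. is_character G K \<phi>1 \<Longrightarrow> is_character G K \<phi>2 \<Longrightarrow>
                 n K (\<lambda>x. \<phi>1 x + \<phi>2 x) = n K \<phi>1 + n K \<phi>2"
    and "is_character G K f"
  shows "is_character G K (\<lambda>x. of_nat c * f x) \<and> n K (\<lambda>x. of_nat c * f x) = of_nat c * n K f"
proof -
  have "is_character G K (\<lambda>x. \<Sum>i<c. f x) \<and> n K (\<lambda>x. \<Sum>i<c. f x) = (\<Sum>i<c. n K f)"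
    by (rule n_sum[of G K n "{..<c}" "\<lambda>_. f", OF ACH1]) (auto simp: assms(2))
  then show ?thesis by simp
qed

lemma n_wsum:
  fixes n :: "'a set \<Rightarrow> ('a \<Rightarrow> complex) \<Rightarrow> int"
  assumes ACH1: "\<And>\<phi>1 \<phi>2. is_character G K \<phi>1 \<Longrightarrow> is_character G K \<phi>2 \<Longrightarrow>
                 n K (\<lambda>x. \<phi>1 x + \<phi>2 x) = n K \<phi>1 + n K \<phi>2"
    and "finite I" and "\<And>i. i \<in> I \<Longrightarrow> is_character G K (f i)"
  shows "is_character G K (\<lambda>x. \<Sum>i\<in>I. of_nat (c i) * f i x) \<and>
         n K (\<lambda>x. \<Sum>i\<in>I. of_nat (c i) * f i x) = (\<Sum>i\<in>I. of_nat (c i) * n K (f i))"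
proof -
  have 1: "\<And>i. i \<in> I \<Longrightarrow> is_character G K (\<lambda>x. of_nat (c i) * f i x) \<and> n K (\<lambda>x. of_nat (c i) * f i x) = of_nat (c i) * n K (f i)"
    by (rule n_mult[of G K n, OF ACH1]) (auto simp: assms(3))
  have 2: "is_character G K (\<lambda>x. \<Sum>i\<in>I. of_nat (c i) * f i x) \<and>
         n K (\<lambda>x. \<Sum>i\<in>I. of_nat (c i) * f i x) = (\<Sum>i\<in>I. n K (\<lambda>x. of_nat (c i) * f i x))"
    by (rule n_sum[of G K n I "\<lambda>i x. of_nat (c i) * f i x", OF ACH1 assms(2)]) (use 1 in auto)
  have 3: "(\<Sum>i\<in>I. n K (\<lambda>x. of_nat (c i) * f i x)) = (\<Sum>i\<in>I. of_nat (c i) * n K (f i))"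
    by (rule sum.cong) (use 1 in auto)
  show ?thesis using 2 3 by simp
qed


context group begin

lemma lin_char_iff:
  assumes S: "subgroup S G"
  shows "is_linear_character G S \<psi> \<longleftrightarrow>
    (\<psi> \<one> = 1 \<and> (\<forall>x\<in>S. \<forall>y\<in>S. \<psi> (x \<otimes> y) = \<psi> x * \<psi> y) \<and> (\<forall>x. x \<notin> S \<longrightarrow> \<psi> x = 0))"
proof
  assume "is_linear_character G S \<psi>"
  then obtain d \<rho> where r: "\<forall>h\<in>S. \<rho> h \<in> carrier_mat d d" "\<rho> \<one> = 1\<^sub>m d"
    "\<forall>g\<in>S. \<forall>h\<in>S. \<rho> (g \<otimes> h) = \<rho> g * \<rho> h"
    "\<forall>h. \<psi> h = (if h \<in> S then mat_trace (\<rho> h) else 0)" and one: "\<psi> \<one> = 1"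
    unfolding is_linear_character_def is_character_def by blast
  have "\<one> \<in> S" using S subgroup.one_closed by blast
  hence "of_nat d = (1::complex)" using r(2,4) one by simp
  hence d: "d = 1" by simp
  have v: "\<psi> x = \<rho> x $$ (0,0)" if "x \<in> S" for x
  proof -
    have "dim_row (\<rho> x) = 1" using r(1) that d by auto
    thus ?thesis using r(4) that by (simp add: mat_trace_def)
  qed
  show "\<psi> \<one> = 1 \<and> (\<forall>x\<in>S. \<forall>y\<in>S. \<psi> (x \<otimes> y) = \<psi> x * \<psi> y) \<and> (\<forall>x. x \<notin> S \<longrightarrow> \<psi> x = 0)"
  proof (intro conjI ballI allI impI)
    fix x y assume xy: "x \<in> S" "y \<in> S"
    have xyS: "x \<otimes> y \<in> S" by (rule subgroup.m_closed[OF S xy])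
    have c: "\<rho> x \<in> carrier_mat 1 1" "\<rho> y \<in> carrier_mat 1 1" using r(1) xy d by auto
    show "\<psi> (x \<otimes> y) = \<psi> x * \<psi> y"
    proof -
      have "\<psi> (x \<otimes> y) = (\<rho> x * \<rho> y) $$ (0,0)" using v[OF xyS] r(3) xy by simp
      also have "\<dots> = \<rho> x $$ (0,0) * \<rho> y $$ (0,0)" using c by (simp add: scalar_prod_def)
      finally show ?thesis using v[OF xy(1)] v[OF xy(2)] by simp
    qed
  next
    show "\<psi> \<one> = 1" by (rule one)
  next
    fix x assume "x \<notin> S" thus "\<psi> x = 0" using r(4) by simp
  qed
next
  assume h: "\<psi> \<one> = 1 \<and> (\<forall>x\<in>S. \<forall>y\<in>S. \<psi> (x \<otimes> y) = \<psi> x * \<psi> y) \<and> (\<forall>x. x \<notin> S \<longrightarrow> \<psi> x = 0)"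
  define \<rho> where "\<rho> = (\<lambda>h. mat 1 1 (\<lambda>_. \<psi> h) :: complex mat)"
  have "is_character G S \<psi>" unfolding is_character_def
  proof (intro exI[of _ 1] exI[of _ \<rho>] conjI ballI allI)
    show "\<rho> \<one> = 1\<^sub>m 1" unfolding \<rho>_def using h by (intro eq_matI) auto
  next
    fix g k assume "g \<in> S" "k \<in> S"
    thus "\<rho> (g \<otimes> k) = \<rho> g * \<rho> k" unfolding \<rho>_def using h
      by (intro eq_matI) (auto simp: scalar_prod_def)
  next
    fix k show "\<psi> k = (if k \<in> S then mat_trace (\<rho> k) else 0)"
      unfolding \<rho>_def using h by (auto simp: mat_trace_def)
  qed (auto simp: \<rho>_def)
  thus "is_linear_character G S \<psi>" unfolding is_linear_character_def using h by auto
qed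

end

definition lcos :: "('a, 'b) monoid_scheme \<Rightarrow> 'a set \<Rightarrow> 'a \<Rightarrow> 'a set" where
  "lcos G S x = {y \<in> carrier G. inv\<^bsub>G\<^esub> x \<otimes>\<^bsub>G\<^esub> y \<in> S}"

definition reps :: "('a, 'b) monoid_scheme \<Rightarrow> 'a set \<Rightarrow> 'a set" where
  "reps G S = (\<lambda>x. SOME t. t \<in> lcos G S x) ` carrier G"

context group begin

lemma inv_bij: "bij_betw (\<lambda>x. inv x) (carrier G) (carrier G)"
  by (rule bij_betwI[where g="\<lambda>x. inv x"]) auto

lemma lmult_bij: "m \<in> carrier G \<Longrightarrow> bij_betw (\<lambda>x. m \<otimes> x) (carrier G) (carrier G)"
  by (rule bij_betwI[where g="\<lambda>x. inv m \<otimes> x"]) (auto simp: m_assoc[symmetric])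

lemma cancel1: "x \<in> carrier G \<Longrightarrow> y \<in> carrier G \<Longrightarrow> x \<otimes> (inv x \<otimes> y) = y"
  by (simp add: m_assoc[symmetric])
lemma cancel2: "x \<in> carrier G \<Longrightarrow> y \<in> carrier G \<Longrightarrow> inv x \<otimes> (x \<otimes> y) = y"
  by (simp add: m_assoc[symmetric])

context
  fixes S assumes S: "subgroup S G"
begin

lemma lcos_self: "x \<in> carrier G \<Longrightarrow> x \<in> lcos G S x"
  unfolding lcos_def using S subgroup.one_closed by fastforce

lemma lcos_eq: assumes "x \<in> carrier G" "y \<in> lcos G S x" shows "lcos G S y = lcos G S x"
proof -
  have y: "y \<in> carrier G" "inv x \<otimes> y \<in> S" using assms unfolding lcos_def by auto
  have "inv y \<otimes> z \<in> S \<longleftrightarrow> inv x \<otimes> z \<in> S" if z: "z \<in> carrier G" for z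
  proof
    assume "inv y \<otimes> z \<in> S"
    hence "(inv x \<otimes> y) \<otimes> (inv y \<otimes> z) \<in> S" using y subgroup.m_closed[OF S] by blast
    thus "inv x \<otimes> z \<in> S" using y z assms by (simp add: m_assoc cancel1)
  next
    assume "inv x \<otimes> z \<in> S"
    hence "inv (inv x \<otimes> y) \<otimes> (inv x \<otimes> z) \<in> S" using y subgroup.m_closed[OF S] subgroup.m_inv_closed[OF S] by blast
    thus "inv y \<otimes> z \<in> S" using y z assms
      by (simp add: inv_mult_group m_assoc cancel1)
  qed
  thus ?thesis using y unfolding lcos_def by auto
qed

lemma rep_in: "x \<in> carrier G \<Longrightarrow> (SOME t. t \<in> lcos G S x) \<in> lcos G S x"
  by (rule someI[of _ x]) (rule lcos_self)

lemma reps_sub: "reps G S \<subseteq> carrier G"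
  unfolding reps_def using rep_in unfolding lcos_def by auto

lemma reps_cover: assumes "x \<in> carrier G" shows "\<exists>t\<in>reps G S. inv t \<otimes> x \<in> S"
proof -
  let ?t = "SOME t. t \<in> lcos G S x"
  have t: "?t \<in> carrier G" "inv x \<otimes> ?t \<in> S" using rep_in[OF assms] unfolding lcos_def by auto
  have "inv (inv x \<otimes> ?t) \<in> S" using t subgroup.m_inv_closed[OF S] by blast
  hence "inv ?t \<otimes> x \<in> S" using t assms by (simp add: inv_mult_group)
  moreover have "?t \<in> reps G S" unfolding reps_def using assms by blast
  ultimately show ?thesis by blast
qed

lemma reps_unique: assumes "t \<in> reps G S" "t' \<in> reps G S" "inv t \<otimes> t' \<in> S" shows "t = t'"
proof -
  obtain x where x: "x \<in> carrier G" "t = (SOME t. t \<in> lcos G S x)" using assms(1) unfolding reps_def by blast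
  obtain x' where x': "x' \<in> carrier G" "t' = (SOME t. t \<in> lcos G S x')" using assms(2) unfolding reps_def by blast
  have t: "t \<in> lcos G S x" "t' \<in> lcos G S x'" using rep_in x x' by auto
  have tc: "t \<in> carrier G" "t' \<in> carrier G" using t unfolding lcos_def by auto
  have "lcos G S t = lcos G S x" by (rule lcos_eq[OF x(1) t(1)])
  moreover have "lcos G S t' = lcos G S x'" by (rule lcos_eq[OF x'(1) t(2)])
  moreover have "t' \<in> lcos G S t" using assms(3) tc unfolding lcos_def by auto
  hence "lcos G S t' = lcos G S t" by (rule lcos_eq[OF tc(1)])
  ultimately have "lcos G S x = lcos G S x'" by simp
  thus ?thesis using x x' by simp
qed

lemma reps_unique2: assumes "t \<in> reps G S" "t' \<in> reps G S" "x \<in> carrier G"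
  "inv t \<otimes> x \<in> S" "inv t' \<otimes> x \<in> S" shows "t = t'"
proof -
  have tc: "t \<in> carrier G" "t' \<in> carrier G" using assms reps_sub by auto
  have m: "(inv t \<otimes> x) \<otimes> inv (inv t' \<otimes> x) \<in> S"
    using assms subgroup.m_closed[OF S] subgroup.m_inv_closed[OF S] by blast
  have "(inv t \<otimes> x) \<otimes> inv (inv t' \<otimes> x) = inv t \<otimes> (x \<otimes> (inv x \<otimes> t'))"
    using tc assms(3) by (simp add: inv_mult_group m_assoc)
  also have "\<dots> = inv t \<otimes> t'" using tc assms(3) by (simp add: cancel1)
  finally have "inv t \<otimes> t' \<in> S" using m by simp
  thus ?thesis using reps_unique assms by blast
qed

lemma reps_bij: "bij_betw (\<lambda>(t,s). t \<otimes> s) (reps G S \<times> S) (carrier G)"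
proof -
  have Ssub: "S \<subseteq> carrier G" using S subgroup.subset by blast
  show ?thesis unfolding bij_betw_def
  proof
    show "inj_on (\<lambda>(t, s). t \<otimes> s) (reps G S \<times> S)"
    proof (rule inj_onI, clarify)
      fix t s t' s' assume a: "t \<in> reps G S" "s \<in> S" "t' \<in> reps G S" "s' \<in> S" "t \<otimes> s = t' \<otimes> s'"
      have c: "t \<in> carrier G" "t' \<in> carrier G" "s \<in> carrier G" "s' \<in> carrier G" using a reps_sub Ssub by auto
      have "inv t \<otimes> t' = s \<otimes> inv s'" using a(5) c
        by (metis inv_closed m_assoc m_closed r_inv r_one inv_solve_left inv_solve_right)
      hence "inv t \<otimes> t' \<in> S" using a subgroup.m_closed[OF S] subgroup.m_inv_closed[OF S] by metis
      hence "t = t'" using reps_unique a by blast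
      thus "t = t' \<and> s = s'" using a(5) c by simp
    qed
  next
    show "(\<lambda>(t, s). t \<otimes> s) ` (reps G S \<times> S) = carrier G"
    proof
      show "(\<lambda>(t, s). t \<otimes> s) ` (reps G S \<times> S) \<subseteq> carrier G" using reps_sub Ssub by auto
    next
      show "carrier G \<subseteq> (\<lambda>(t, s). t \<otimes> s) ` (reps G S \<times> S)"
      proof
        fix x assume x: "x \<in> carrier G"
        obtain t where t: "t \<in> reps G S" "inv t \<otimes> x \<in> S" using reps_cover[OF x] by blast
        have "t \<in> carrier G" using t reps_sub by auto
        hence "x = t \<otimes> (inv t \<otimes> x)" using x by (simp add: cancel1)
        thus "x \<in> (\<lambda>(t, s). t \<otimes> s) ` (reps G S \<times> S)" using t by force
      qed
    qed
  qed
qed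

end
end

definition z0 :: "'a set \<Rightarrow> ('a \<Rightarrow> complex) \<Rightarrow> 'a \<Rightarrow> complex" where
  "z0 S \<psi> y = (if y \<in> S then \<psi> y else 0)"

context group begin

context
  fixes S and \<psi> :: "'a \<Rightarrow> complex" assumes S: "subgroup S G" and fin: "finite (carrier G)"
    and p1: "\<psi> \<one> = 1" and pm: "\<And>x y. x \<in> S \<Longrightarrow> y \<in> S \<Longrightarrow> \<psi> (x \<otimes> y) = \<psi> x * \<psi> y"
begin

abbreviation "\<psi>0 \<equiv> z0 S \<psi>"

lemma Ssub: "S \<subseteq> carrier G" using S subgroup.subset by blast

lemma psi_conj: assumes s: "s \<in> S" and y: "y \<in> carrier G"
  shows "\<psi>0 (inv s \<otimes> y \<otimes> s) = \<psi>0 y"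
proof -
  have sc: "s \<in> carrier G" using s Ssub by auto
  have isS: "inv s \<in> S" using s subgroup.m_inv_closed[OF S] by blast
  have iff: "inv s \<otimes> y \<otimes> s \<in> S \<longleftrightarrow> y \<in> S"
  proof
    assume "y \<in> S" thus "inv s \<otimes> y \<otimes> s \<in> S" using isS s subgroup.m_closed[OF S] by blast
  next
    assume a: "inv s \<otimes> y \<otimes> s \<in> S"
    have "s \<otimes> (inv s \<otimes> y \<otimes> s) \<otimes> inv s \<in> S" using a isS s subgroup.m_closed[OF S] by blast
    also have "s \<otimes> (inv s \<otimes> y \<otimes> s) \<otimes> inv s = y" using sc y by (simp add: m_assoc cancel1)
    finally show "y \<in> S" .
  qed
  show ?thesis
  proof (cases "y \<in> S")
    case True
    have "\<psi> (inv s \<otimes> y \<otimes> s) = \<psi> (inv s) * \<psi> y * \<psi> s"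
      using pm True isS s subgroup.m_closed[OF S] by metis
    also have "\<psi> (inv s) * \<psi> s = 1" using pm[OF isS s] p1 sc by simp
    hence "\<psi> (inv s) * \<psi> y * \<psi> s = \<psi> y" by (simp add: algebra_simps)
    finally show ?thesis using iff True by (simp add: z0_def)
  qed (use iff in \<open>simp add: z0_def\<close>)
qed

lemma induce_reps: assumes g: "g \<in> carrier G"
  shows "induce G S \<psi> g = (\<Sum>t\<in>reps G S. \<psi>0 (inv t \<otimes> g \<otimes> t))"
proof -
  have fS: "finite S" using fin Ssub finite_subset by blast
  have fR: "finite (reps G S)" using fin reps_sub[OF S] finite_subset by blast
  have cS: "card S > 0" using fS S subgroup.one_closed card_gt_0_iff by blast
  have "(\<Sum>x\<in>carrier G. \<psi>0 (x \<otimes> g \<otimes> inv x)) = (\<Sum>x\<in>carrier G. \<psi>0 (inv x \<otimes> g \<otimes> inv (inv x)))"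
    using sum.reindex_bij_betw[OF inv_bij, of "\<lambda>x. \<psi>0 (x \<otimes> g \<otimes> inv x)"] by simp
  also have "\<dots> = (\<Sum>x\<in>carrier G. \<psi>0 (inv x \<otimes> g \<otimes> x))" by (intro sum.cong) auto
  also have "\<dots> = (\<Sum>p\<in>reps G S \<times> S. \<psi>0 (inv ((\<lambda>(t,s). t \<otimes> s) p) \<otimes> g \<otimes> ((\<lambda>(t,s). t \<otimes> s) p)))"
    using sum.reindex_bij_betw[OF reps_bij[OF S], of "\<lambda>x. \<psi>0 (inv x \<otimes> g \<otimes> x)"] by simp
  also have "\<dots> = (\<Sum>p\<in>reps G S \<times> S. \<psi>0 (inv (fst p) \<otimes> g \<otimes> fst p))"
  proof (rule sum.cong[OF refl])
    fix p assume p: "p \<in> reps G S \<times> S"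
    then obtain t s where ts: "t \<in> reps G S" "s \<in> S" and pe: "p = (t, s)" by blast
    have c: "t \<in> carrier G" "s \<in> carrier G" using ts reps_sub[OF S] Ssub by auto
    have "inv (t \<otimes> s) \<otimes> g \<otimes> (t \<otimes> s) = inv s \<otimes> (inv t \<otimes> g \<otimes> t) \<otimes> s"
      using c g by (simp add: inv_mult_group m_assoc)
    thus "\<psi>0 (inv ((\<lambda>(t,s). t \<otimes> s) p) \<otimes> g \<otimes> ((\<lambda>(t,s). t \<otimes> s) p)) = \<psi>0 (inv (fst p) \<otimes> g \<otimes> fst p)"
      using psi_conj[OF ts(2), of "inv t \<otimes> g \<otimes> t"] c g pe by simp
  qed
  also have "\<dots> = (\<Sum>t\<in>reps G S. \<Sum>s\<in>S. \<psi>0 (inv t \<otimes> g \<otimes> t))"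
    by (simp only: sum.cartesian_product' fst_conv)
  also have "\<dots> = of_nat (card S) * (\<Sum>t\<in>reps G S. \<psi>0 (inv t \<otimes> g \<otimes> t))"
    by (simp add: sum_distrib_left)
  finally show ?thesis unfolding induce_def Let_def using g cS by (simp add: z0_def)
qed

lemma induce_is_character: "is_character G (carrier G) (induce G S \<psi>)"
proof -
  have fR: "finite (reps G S)" using fin reps_sub[OF S] finite_subset by blast
  obtain e where e: "bij_betw e {0..<card (reps G S)} (reps G S)"
    using ex_bij_betw_nat_finite[OF fR] by blast
  define m where "m = card (reps G S)"
  have e': "bij_betw e {..<m} (reps G S)" using e unfolding m_def by (simp add: atLeast0LessThan)
  have ec: "e i \<in> carrier G" if "i < m" for i using e' that reps_sub[OF S] bij_betwE by blast
  have er: "e i \<in> reps G S" if "i < m" for i using e' that bij_betwE by blast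
  have einj: "i = j" if "i < m" "j < m" "e i = e j" for i j
    using e' that unfolding bij_betw_def inj_on_def by blast
  have esurj: "\<exists>i<m. e i = t" if "t \<in> reps G S" for t
    using e' that unfolding bij_betw_def by force
  define \<rho> where "\<rho> = (\<lambda>g. mat m m (\<lambda>(i,j). \<psi>0 (inv (e i) \<otimes> g \<otimes> e j)))"
  show ?thesis unfolding is_character_def
  proof (intro exI[of _ m] exI[of _ \<rho>] conjI ballI allI)
    fix h show "\<rho> h \<in> carrier_mat m m" unfolding \<rho>_def by simp
  next
    show "\<rho> \<one> = 1\<^sub>m m" unfolding \<rho>_def
    proof (rule eq_matI)
      fix i j assume ij: "i < dim_row (1\<^sub>m m)" "j < dim_col (1\<^sub>m m)"
      hence ij': "i < m" "j < m" by auto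
      show "mat m m (\<lambda>(i, j). \<psi>0 (inv e i \<otimes> \<one> \<otimes> e j)) $$ (i, j) = 1\<^sub>m m $$ (i, j)"
      proof (cases "i = j")
        case True thus ?thesis using ij' ec[OF ij'(1)] p1 S subgroup.one_closed by (auto simp: z0_def)
      next
        case False
        have "inv e i \<otimes> e j \<notin> S"
        proof
          assume "inv e i \<otimes> e j \<in> S"
          hence "e i = e j" using reps_unique[OF S er[OF ij'(1)] er[OF ij'(2)]] by blast
          thus False using einj ij' False by blast
        qed
        thus ?thesis using ij' False ec by (auto simp: z0_def)
      qed
    qed auto
  next
    fix g h assume gh: "g \<in> carrier G" "h \<in> carrier G"
    show "\<rho> (g \<otimes> h) = \<rho> g * \<rho> h" unfolding \<rho>_def
    proof (rule eq_matI)
      fix i k assume "i < dim_row (mat m m (\<lambda>(i, j). \<psi>0 (inv e i \<otimes> g \<otimes> e j)) * mat m m (\<lambda>(i, j). \<psi>0 (inv e i \<otimes> h \<otimes> e j)))"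
        "k < dim_col (mat m m (\<lambda>(i, j). \<psi>0 (inv e i \<otimes> g \<otimes> e j)) * mat m m (\<lambda>(i, j). \<psi>0 (inv e i \<otimes> h \<otimes> e j)))"
      hence ik: "i < m" "k < m" by auto
      define y where "y = h \<otimes> e k"
      have y: "y \<in> carrier G" unfolding y_def using gh ec ik by auto
      obtain t where t: "t \<in> reps G S" "inv t \<otimes> y \<in> S" using reps_cover[OF S y] by blast
      obtain j0 where j0: "j0 < m" "e j0 = t" using esurj[OF t(1)] by blast
      have other: "inv (e j) \<otimes> y \<notin> S" if "j < m" "j \<noteq> j0" for j
      proof
        assume "inv (e j) \<otimes> y \<in> S"
        hence "e j = t" using reps_unique2[OF S er[OF that(1)] t(1) y] t(2) by blast
        thus False using einj[OF that(1) j0(1)] j0 that by simp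
      qed
      have eqy: "inv (e j) \<otimes> h \<otimes> e k = inv (e j) \<otimes> y" if "j < m" for j
        unfolding y_def using ec that ik gh by (simp add: m_assoc)
      have "(mat m m (\<lambda>(i, j). \<psi>0 (inv e i \<otimes> g \<otimes> e j)) * mat m m (\<lambda>(i, j). \<psi>0 (inv e i \<otimes> h \<otimes> e j))) $$ (i, k)
          = (\<Sum>j<m. \<psi>0 (inv e i \<otimes> g \<otimes> e j) * \<psi>0 (inv (e j) \<otimes> h \<otimes> e k))"
        using ik by (simp add: scalar_prod_def atLeast0LessThan)
      also have "\<dots> = (\<Sum>j<m. \<psi>0 (inv e i \<otimes> g \<otimes> e j) * \<psi>0 (inv (e j) \<otimes> y))"
        by (rule sum.cong) (simp_all add: eqy)
      also have "\<dots> = \<psi>0 (inv e i \<otimes> g \<otimes> e j0) * \<psi>0 (inv (e j0) \<otimes> y)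
            + (\<Sum>j\<in>{..<m}-{j0}. \<psi>0 (inv e i \<otimes> g \<otimes> e j) * \<psi>0 (inv (e j) \<otimes> y))"
        by (rule sum.remove) (use j0 in auto)
      also have "(\<Sum>j\<in>{..<m}-{j0}. \<psi>0 (inv e i \<otimes> g \<otimes> e j) * \<psi>0 (inv (e j) \<otimes> y)) = 0"
        by (rule sum.neutral) (use other in \<open>auto simp: z0_def\<close>)
      also have "\<psi>0 (inv e i \<otimes> g \<otimes> e j0) * \<psi>0 (inv (e j0) \<otimes> y) + 0 = \<psi>0 (inv e i \<otimes> (g \<otimes> h) \<otimes> e k)"
      proof -
        have c: "inv e i \<otimes> g \<otimes> e j0 \<in> carrier G" "inv (e j0) \<otimes> y \<in> carrier G" using ec ik j0 gh y by auto
        have prod: "(inv e i \<otimes> g \<otimes> e j0) \<otimes> (inv (e j0) \<otimes> y) = inv e i \<otimes> (g \<otimes> h) \<otimes> e k"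
        proof -
          have c3: "e i \<in> carrier G" "e k \<in> carrier G" "e j0 \<in> carrier G" using ec ik j0 by auto
          show ?thesis unfolding y_def using c3 gh by (simp add: m_assoc cancel1)
        qed
        show ?thesis
        proof (cases "inv e i \<otimes> g \<otimes> e j0 \<in> S")
          case True
          have "inv e i \<otimes> (g \<otimes> h) \<otimes> e k \<in> S" using prod True t j0 subgroup.m_closed[OF S] by metis
          have b: "inv (e j0) \<otimes> y \<in> S" using t j0 by simp
          have "\<psi>0 (inv e i \<otimes> g \<otimes> e j0) * \<psi>0 (inv (e j0) \<otimes> y) = \<psi> (inv e i \<otimes> g \<otimes> e j0) * \<psi> (inv (e j0) \<otimes> y)"
            using True b by (simp add: z0_def)
          also have "\<dots> = \<psi> ((inv e i \<otimes> g \<otimes> e j0) \<otimes> (inv (e j0) \<otimes> y))" using pm[OF True b] by simp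
          finally show ?thesis using prod True b \<open>inv e i \<otimes> (g \<otimes> h) \<otimes> e k \<in> S\<close> by (simp add: z0_def)
        next
          case False
          have "inv e i \<otimes> (g \<otimes> h) \<otimes> e k \<notin> S"
          proof
            assume a: "inv e i \<otimes> (g \<otimes> h) \<otimes> e k \<in> S"
            have "(inv e i \<otimes> (g \<otimes> h) \<otimes> e k) \<otimes> inv (inv (e j0) \<otimes> y) \<in> S"
              using a t j0 subgroup.m_closed[OF S] subgroup.m_inv_closed[OF S] by metis
            also have "(inv e i \<otimes> (g \<otimes> h) \<otimes> e k) \<otimes> inv (inv (e j0) \<otimes> y) = inv e i \<otimes> g \<otimes> e j0"
              using prod[symmetric] c by (simp add: m_assoc)
            finally show False using False by simp
          qed
          thus ?thesis using False by (simp add: z0_def)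
        qed
      qed
      finally show "mat m m (\<lambda>(i, j). \<psi>0 (inv e i \<otimes> (g \<otimes> h) \<otimes> e j)) $$ (i, k) =
         (mat m m (\<lambda>(i, j). \<psi>0 (inv e i \<otimes> g \<otimes> e j)) * mat m m (\<lambda>(i, j). \<psi>0 (inv e i \<otimes> h \<otimes> e j))) $$ (i, k)"
        using ik by simp
    qed auto
  next
    fix h show "induce G S \<psi> h = (if h \<in> carrier G then mat_trace (\<rho> h) else 0)"
    proof (cases "h \<in> carrier G")
      case True
      have "mat_trace (\<rho> h) = (\<Sum>i<m. \<psi>0 (inv (e i) \<otimes> h \<otimes> e i))"
        unfolding \<rho>_def mat_trace_def by simp
      also have "\<dots> = (\<Sum>t\<in>reps G S. \<psi>0 (inv t \<otimes> h \<otimes> t))"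
        using sum.reindex_bij_betw[OF e', of "\<lambda>t. \<psi>0 (inv t \<otimes> h \<otimes> t)"] by simp
      finally show ?thesis using induce_reps[OF True] True by simp
    qed (simp add: induce_def)
  qed
qed

end
end

lemma (in group) fin_subgroupI:
  assumes fin: "finite (carrier G)" and U: "U \<subseteq> carrier G" "\<one> \<in> U"
    and mc: "\<And>x y. x \<in> U \<Longrightarrow> y \<in> U \<Longrightarrow> x \<otimes> y \<in> U"
  shows "subgroup U G"
proof (rule subgroupI)
  show "U \<subseteq> carrier G" by fact
  show "U \<noteq> {}" using U by blast
  show "\<And>a b. a \<in> U \<Longrightarrow> b \<in> U \<Longrightarrow> a \<otimes> b \<in> U" by fact
  fix a assume a: "a \<in> U"
  have pw: "a [^] (n::nat) \<in> U" for n by (induction n) (use a U mc in auto)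
  have ac: "a \<in> carrier G" using a U by auto
  have o: "order G > 0" using fin order_gt_0_iff_finite by blast
  have "a [^] (order G - 1) \<otimes> a = a [^] order G"
    using ac o by (metis Suc_diff_1 nat_pow_Suc)
  also have "\<dots> = \<one>" using pow_order_eq_1[OF ac] .
  finally have "inv a = a [^] (order G - 1)" using ac by (simp add: inv_equality)
  thus "inv a \<in> U" using pw by simp
qed

definition chars :: "('a, 'b) monoid_scheme \<Rightarrow> 'a set \<Rightarrow> 'a set \<Rightarrow> ('a \<Rightarrow> complex) set" where
  "chars G H L = {\<alpha>. (\<forall>x\<in>L. \<forall>y\<in>L. \<alpha> (x \<otimes>\<^bsub>G\<^esub> y) = \<alpha> x * \<alpha> y) \<and> (\<forall>k\<in>H \<inter> L. \<alpha> k = 1) \<and> (\<forall>x. x \<notin> L \<longrightarrow> \<alpha> x = 0)}"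

locale sect = group G for G (structure) +
  fixes H L
  assumes fin: "finite (carrier G)" and H: "subgroup H G" and L: "subgroup L G"
    and norm: "\<And>h l. h \<in> H \<Longrightarrow> l \<in> L \<Longrightarrow> h \<otimes> l \<otimes> inv h \<in> L"
    and comm: "\<And>a b. a \<in> L \<Longrightarrow> b \<in> L \<Longrightarrow> a \<otimes> b \<otimes> inv a \<otimes> inv b \<in> H"
begin

lemma Lsub: "L \<subseteq> carrier G" by (rule subgroup.subset[OF L])
lemma Hsub: "H \<subseteq> carrier G" by (rule subgroup.subset[OF H])
lemma oneK: "\<one> \<in> H \<inter> L" using subgroup.one_closed[OF H] subgroup.one_closed[OF L] by simp
lemma Lm: "x \<in> L \<Longrightarrow> y \<in> L \<Longrightarrow> x \<otimes> y \<in> L" by (rule subgroup.m_closed[OF L])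
lemma Li: "x \<in> L \<Longrightarrow> inv x \<in> L" by (rule subgroup.m_inv_closed[OF L])
lemma Hm: "x \<in> H \<Longrightarrow> y \<in> H \<Longrightarrow> x \<otimes> y \<in> H" by (rule subgroup.m_closed[OF H])
lemma Hi: "x \<in> H \<Longrightarrow> inv x \<in> H" by (rule subgroup.m_inv_closed[OF H])
lemma Lc: "x \<in> L \<Longrightarrow> x \<in> carrier G" using Lsub by (rule subsetD)
lemma Hc: "x \<in> H \<Longrightarrow> x \<in> carrier G" using Hsub by (rule subsetD)
lemma finL: "finite L" using finite_subset[OF Lsub fin] .
lemma finH: "finite H" using finite_subset[OF Hsub fin] .

lemma commK: "a \<in> L \<Longrightarrow> b \<in> L \<Longrightarrow> a \<otimes> b \<otimes> inv a \<otimes> inv b \<in> H \<inter> L"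
proof -
  assume ab: "a \<in> L" "b \<in> L"
  have "a \<otimes> b \<otimes> inv a \<otimes> inv b \<in> L" by (intro Lm Li ab)
  thus ?thesis using comm[OF ab] by simp
qed

lemma ch_one: "\<alpha> \<in> chars G H L \<Longrightarrow> \<alpha> \<one> = 1"
  using oneK unfolding chars_def by simp

lemma ch_mult: "\<alpha> \<in> chars G H L \<Longrightarrow> x \<in> L \<Longrightarrow> y \<in> L \<Longrightarrow> \<alpha> (x \<otimes> y) = \<alpha> x * \<alpha> y"
  unfolding chars_def by simp

lemma ch_out: "\<alpha> \<in> chars G H L \<Longrightarrow> x \<notin> L \<Longrightarrow> \<alpha> x = 0"
  unfolding chars_def by simp

lemma ch_K: "\<alpha> \<in> chars G H L \<Longrightarrow> x \<in> H \<Longrightarrow> x \<in> L \<Longrightarrow> \<alpha> x = 1"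
  unfolding chars_def by simp

lemma ch_inv: assumes "\<alpha> \<in> chars G H L" "x \<in> L" shows "\<alpha> x * \<alpha> (inv x) = 1"
proof -
  have "\<alpha> (x \<otimes> inv x) = \<alpha> x * \<alpha> (inv x)" using ch_mult[OF assms(1) assms(2) Li[OF assms(2)]] .
  moreover have "x \<in> carrier G" using assms(2) Lsub by blast
  ultimately show ?thesis using ch_one[OF assms(1)] by simp
qed

lemma ch_nz: "\<alpha> \<in> chars G H L \<Longrightarrow> x \<in> L \<Longrightarrow> \<alpha> x \<noteq> 0"
  using ch_inv by fastforce

lemma L_pow: "x \<in> L \<Longrightarrow> x [^] (n::nat) \<in> L"
proof (induction n)
  case 0 thus ?case using oneK by simp
next
  case (Suc n) thus ?case using Lm by simp
qed

lemma ch_pow: assumes "\<alpha> \<in> chars G H L" "x \<in> L" shows "\<alpha> (x [^] (n::nat)) = \<alpha> x ^ n"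
proof (induction n)
  case 0 thus ?case using ch_one[OF assms(1)] by simp
next
  case (Suc n)
  have "\<alpha> (x [^] Suc n) = \<alpha> (x [^] n \<otimes> x)" by simp
  also have "\<dots> = \<alpha> (x [^] n) * \<alpha> x" by (rule ch_mult[OF assms(1) L_pow[OF assms(2)] assms(2)])
  finally show ?case using Suc by simp
qed

lemma ch_root: assumes "\<alpha> \<in> chars G H L" "x \<in> L" shows "\<alpha> x ^ order G = 1"
proof -
  have "x \<in> carrier G" using assms Lsub by blast
  hence "x [^] order G = \<one>" by (rule pow_order_eq_1)
  thus ?thesis using ch_pow[OF assms, of "order G"] ch_one[OF assms(1)] by simp
qed

lemma finite_chars: "finite (chars G H L)"
proof -
  have o: "order G > 0" using fin order_gt_0_iff_finite by blast
  let ?R = "{z::complex. z ^ order G = 1}"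
  have fR: "finite ?R" by (rule finite_roots_unity) (use o in simp)
  have "chars G H L \<subseteq> (\<lambda>f x. if x \<in> L then f x else 0) ` (PiE L (\<lambda>_. ?R))"
  proof
    fix \<alpha> assume a: "\<alpha> \<in> chars G H L"
    have "restrict \<alpha> L \<in> PiE L (\<lambda>_. ?R)" using ch_root[OF a] by auto
    moreover have "\<alpha> = (\<lambda>x. if x \<in> L then restrict \<alpha> L x else 0)" using ch_out[OF a] by (intro ext) simp
    ultimately show "\<alpha> \<in> (\<lambda>f x. if x \<in> L then f x else 0) ` (PiE L (\<lambda>_. ?R))" by blast
  qed
  moreover have "finite (PiE L (\<lambda>_. ?R))" using finL fR by (simp add: finite_PiE)
  ultimately show ?thesis by (rule finite_subset[OF _ finite_imageI])
qed

definition "oneL = (\<lambda>x. if x \<in> L then 1 else 0)"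

lemma oneL_ch: "oneL \<in> chars G H L"
  unfolding chars_def oneL_def using Lm by auto

lemma mult_ch: "\<alpha> \<in> chars G H L \<Longrightarrow> \<beta> \<in> chars G H L \<Longrightarrow> (\<lambda>x. \<alpha> x * \<beta> x) \<in> chars G H L"
  unfolding chars_def by auto

lemma lmult_bij_L: "m \<in> L \<Longrightarrow> bij_betw (\<lambda>x. m \<otimes> x) L L"
  by (rule bij_betwI[where g="\<lambda>x. inv m \<otimes> x"])
     (auto simp: cancel1 cancel2 Lc Lm Li)

lemma orth1: fixes \<beta> :: "'a \<Rightarrow> complex" assumes hom: "\<And>x y. x \<in> L \<Longrightarrow> y \<in> L \<Longrightarrow> \<beta> (x \<otimes> y) = \<beta> x * \<beta> y"
  shows "(\<Sum>m\<in>L. \<beta> m) = (if \<forall>m\<in>L. \<beta> m = 1 then of_nat (card L) else 0)"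
proof (cases "\<forall>m\<in>L. \<beta> m = 1")
  case True thus ?thesis by simp
next
  case False
  then obtain m0 where m0: "m0 \<in> L" "\<beta> m0 \<noteq> 1" by blast
  have "(\<Sum>m\<in>L. \<beta> m) = (\<Sum>m\<in>L. \<beta> (m0 \<otimes> m))"
    using sum.reindex_bij_betw[OF lmult_bij_L[OF m0(1)], of \<beta>] by simp
  also have "\<dots> = (\<Sum>m\<in>L. \<beta> m0 * \<beta> m)" by (rule sum.cong) (use hom m0 in auto)
  also have "\<dots> = \<beta> m0 * (\<Sum>m\<in>L. \<beta> m)" by (simp add: sum_distrib_left)
  finally have "(1 - \<beta> m0) * (\<Sum>m\<in>L. \<beta> m) = 0" by (simp add: algebra_simps)
  thus ?thesis using m0 False by auto
qed

end

definition rr :: "('a, 'b) monoid_scheme \<Rightarrow> 'a set \<Rightarrow> 'a \<Rightarrow> nat" where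
  "rr G U w = (LEAST r::nat. 0 < r \<and> w [^]\<^bsub>G\<^esub> r \<in> U)"
definition U' :: "('a, 'b) monoid_scheme \<Rightarrow> 'a set \<Rightarrow> 'a \<Rightarrow> 'a set" where
  "U' G U w = {x \<in> carrier G. \<exists>i::nat. inv\<^bsub>G\<^esub> (w [^]\<^bsub>G\<^esub> i) \<otimes>\<^bsub>G\<^esub> x \<in> U}"
definition bext :: "('a, 'b) monoid_scheme \<Rightarrow> 'a set \<Rightarrow> ('a \<Rightarrow> complex) \<Rightarrow> 'a \<Rightarrow> complex \<Rightarrow> 'a \<Rightarrow> complex" where
  "bext G U \<beta> w c x = (if x \<in> U' G U w then c ^ (SOME i::nat. inv\<^bsub>G\<^esub> (w [^]\<^bsub>G\<^esub> i) \<otimes>\<^bsub>G\<^esub> x \<in> U)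
      * \<beta> (inv\<^bsub>G\<^esub> (w [^]\<^bsub>G\<^esub> (SOME i::nat. inv\<^bsub>G\<^esub> (w [^]\<^bsub>G\<^esub> i) \<otimes>\<^bsub>G\<^esub> x \<in> U)) \<otimes>\<^bsub>G\<^esub> x) else 0)"

context sect begin

definition "homon U \<beta> \<longleftrightarrow> (\<forall>x\<in>U. \<forall>y\<in>U. \<beta> (x \<otimes> y) = \<beta> x * (\<beta> y :: complex))"

lemma conj_decomp: "a \<in> carrier G \<Longrightarrow> u \<in> carrier G \<Longrightarrow> a \<otimes> u \<otimes> inv a = (a \<otimes> u \<otimes> inv a \<otimes> inv u) \<otimes> u"
  by (simp add: m_assoc)

context
  fixes U and \<beta> :: "'a \<Rightarrow> complex"
  assumes U: "subgroup U G" and KU: "H \<inter> L \<subseteq> U" and UL: "U \<subseteq> L"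
    and hom: "homon U \<beta>" and bK: "\<And>k. k \<in> H \<inter> L \<Longrightarrow> \<beta> k = 1"
begin

lemma Um: "x \<in> U \<Longrightarrow> y \<in> U \<Longrightarrow> x \<otimes> y \<in> U" by (rule subgroup.m_closed[OF U])
lemma Ui: "x \<in> U \<Longrightarrow> inv x \<in> U" by (rule subgroup.m_inv_closed[OF U])
lemma Uc: "x \<in> U \<Longrightarrow> x \<in> carrier G" by (rule Lc[OF subsetD[OF UL]])
lemma U1: "\<one> \<in> U" by (rule subsetD[OF KU oneK])
lemma bm: "x \<in> U \<Longrightarrow> y \<in> U \<Longrightarrow> \<beta> (x \<otimes> y) = \<beta> x * \<beta> y" using hom by (simp add: homon_def)
lemma b1: "\<beta> \<one> = 1" by (rule bK[OF oneK])
lemma binv: "x \<in> U \<Longrightarrow> \<beta> x * \<beta> (inv x) = 1"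
  using bm[of x "inv x"] Ui[of x] b1 Uc[of x] by simp
lemma Upow: "x \<in> U \<Longrightarrow> x [^] (n::nat) \<in> U"
proof (induction n)
  case 0 thus ?case using U1 by simp
next
  case (Suc n) thus ?case using Um by simp
qed

lemma bpow: "x \<in> U \<Longrightarrow> \<beta> (x [^] (n::nat)) = \<beta> x ^ n"
proof (induction n)
  case 0 thus ?case using b1 by simp
next
  case (Suc n)
  have p: "x [^] n \<in> U" by (rule Upow[OF Suc(2)])
  show ?case using bm[OF p Suc(2)] Suc by simp
qed

lemma normU: assumes a: "a \<in> L" and u: "u \<in> U"
  shows "a \<otimes> u \<otimes> inv a \<in> U" "\<beta> (a \<otimes> u \<otimes> inv a) = \<beta> u"
proof -
  have uL: "u \<in> L" by (rule subsetD[OF UL u])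
  have k: "a \<otimes> u \<otimes> inv a \<otimes> inv u \<in> H \<inter> L" by (rule commK[OF a uL])
  have kU: "a \<otimes> u \<otimes> inv a \<otimes> inv u \<in> U" by (rule subsetD[OF KU k])
  have e: "a \<otimes> u \<otimes> inv a = (a \<otimes> u \<otimes> inv a \<otimes> inv u) \<otimes> u"
    by (rule conj_decomp[OF Lc[OF a] Uc[OF u]])
  show "a \<otimes> u \<otimes> inv a \<in> U" by (subst e) (rule Um[OF kU u])
  have "\<beta> (a \<otimes> u \<otimes> inv a) = \<beta> ((a \<otimes> u \<otimes> inv a \<otimes> inv u) \<otimes> u)" by (rule arg_cong[OF e])
  also have "\<dots> = \<beta> u" using bm[OF kU u] bK[OF k] by simp
  finally show "\<beta> (a \<otimes> u \<otimes> inv a) = \<beta> u" .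
qed

context
  fixes w c
  assumes w: "w \<in> L" and wU: "w \<notin> U"
    and cr: "c ^ rr G U w = \<beta> (w [^] rr G U w)"
begin

abbreviation "r0 \<equiv> rr G U w"

lemma wc: "w \<in> carrier G" using Lc[OF w] .

lemma r_ex: "0 < r0 \<and> w [^] r0 \<in> U"
proof -
  have o: "order G > 0" using fin order_gt_0_iff_finite by blast
  have "w [^] order G = \<one>" by (rule pow_order_eq_1[OF wc])
  hence "0 < order G \<and> w [^] order G \<in> U" using o U1 by simp
  thus ?thesis unfolding rr_def by (rule LeastI[where P="\<lambda>r. 0 < r \<and> w [^] r \<in> U"])
qed

lemma r_min: "0 < s \<Longrightarrow> s < r0 \<Longrightarrow> w [^] s \<notin> U"
  unfolding rr_def using not_less_Least by blast


lemma Pw: assumes d: "w [^] (d::nat) \<in> U" shows "c ^ d = \<beta> (w [^] d)"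
proof -
  define q where "q = d div r0"
  define s where "s = d mod r0"
  have ds: "d = r0 * q + s" unfolding q_def s_def by simp
  have wr: "w [^] r0 \<in> U" using r_ex by simp
  have wrq: "(w [^] r0) [^] q \<in> U" by (rule Upow[OF wr])
  have "w [^] d = (w [^] r0) [^] q \<otimes> w [^] s" using wc ds by (simp add: nat_pow_pow nat_pow_mult)
  hence "w [^] s = inv ((w [^] r0) [^] q) \<otimes> w [^] d" using wc by (simp add: cancel2)
  hence "w [^] s \<in> U" using Um[OF Ui[OF wrq] d] by simp
  hence sU: "w [^] s \<in> U" .
  have sr: "s < r0" unfolding s_def using r_ex by simp
  have "s = 0"
  proof (rule ccontr)
    assume "s \<noteq> 0" hence "0 < s" by simp
    thus False using r_min[OF _ sr] sU by simp
  qed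
  hence dq: "d = r0 * q" using ds by simp
  have "c ^ d = (c ^ r0) ^ q" unfolding dq by (simp add: power_mult)
  also have "\<dots> = \<beta> (w [^] r0) ^ q" using cr by simp
  also have "\<dots> = \<beta> ((w [^] r0) [^] q)" using bpow[OF wr] by simp
  also have "\<dots> = \<beta> (w [^] d)" unfolding dq using wc by (simp add: nat_pow_pow)
  finally show ?thesis .
qed

lemma wpow_inv_U: "w [^] (d::nat) \<in> U \<Longrightarrow> \<beta> (w [^] d) \<noteq> 0"
  using binv by fastforce

lemma WD1: assumes x: "x \<in> carrier G" and i: "inv (w [^] i) \<otimes> x \<in> U" and j: "inv (w [^] j) \<otimes> x \<in> U"
  and ij: "(i::nat) \<le> j"
  shows "c ^ i * \<beta> (inv (w [^] i) \<otimes> x) = c ^ j * \<beta> (inv (w [^] j) \<otimes> x)"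
proof -
  define d where "d = j - i"
  have jd: "j = i + d" unfolding d_def using ij by simp
  have wid: "w [^] j = w [^] i \<otimes> w [^] d" unfolding jd using wc by (simp add: nat_pow_mult)
  have pc: "w [^] i \<in> carrier G" "w [^] d \<in> carrier G" using wc by auto
  have e1: "(inv (w [^] i) \<otimes> x) \<otimes> inv (inv (w [^] j) \<otimes> x) = w [^] d"
    using pc x by (simp add: wid inv_mult_group m_assoc cancel1 cancel2)
  have dU: "w [^] d \<in> U" using Um[OF i Ui[OF j]] unfolding e1 .
  have e2: "inv (w [^] j) \<otimes> x = inv (w [^] d) \<otimes> (inv (w [^] i) \<otimes> x)"
    using pc x by (simp add: wid inv_mult_group m_assoc)
  have "c ^ j * \<beta> (inv (w [^] j) \<otimes> x) = c ^ i * c ^ d * (\<beta> (inv (w [^] d)) * \<beta> (inv (w [^] i) \<otimes> x))"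
    unfolding e2 using bm[OF Ui[OF dU] i] jd by (simp add: power_add)
  also have "\<dots> = c ^ i * \<beta> (inv (w [^] i) \<otimes> x) * (\<beta> (w [^] d) * \<beta> (inv (w [^] d)))"
    using Pw[OF dU] by (simp add: algebra_simps)
  also have "\<dots> = c ^ i * \<beta> (inv (w [^] i) \<otimes> x)" using binv[OF dU] by simp
  finally show ?thesis by simp
qed

lemma WD: assumes x: "x \<in> carrier G" and i: "inv (w [^] (i::nat)) \<otimes> x \<in> U" and j: "inv (w [^] (j::nat)) \<otimes> x \<in> U"
  shows "c ^ i * \<beta> (inv (w [^] i) \<otimes> x) = c ^ j * \<beta> (inv (w [^] j) \<otimes> x)"
proof (cases "i \<le> j")
  case True thus ?thesis using WD1[OF x i j] by blast
next
  case False thus ?thesis using WD1[OF x j i] by simp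
qed

abbreviation "U2 \<equiv> U' G U w"
abbreviation "\<beta>2 \<equiv> bext G U \<beta> w c"

lemma memU': "x \<in> carrier G \<Longrightarrow> inv (w [^] (i::nat)) \<otimes> x \<in> U \<Longrightarrow> x \<in> U2"
  unfolding U'_def by blast

lemma b'_val: assumes x: "x \<in> carrier G" and i: "inv (w [^] (i::nat)) \<otimes> x \<in> U"
  shows "\<beta>2 x = c ^ i * \<beta> (inv (w [^] i) \<otimes> x)"
proof -
  have xU: "x \<in> U2" by (rule memU'[OF x i])
  let ?j = "SOME i::nat. inv (w [^] i) \<otimes> x \<in> U"
  have j: "inv (w [^] ?j) \<otimes> x \<in> U" using i by (rule someI)
  show ?thesis unfolding bext_def using xU WD[OF x j i] by simp
qed

lemma U'_L: "U2 \<subseteq> L"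
proof
  fix x assume "x \<in> U2"
  then obtain i::nat where x: "x \<in> carrier G" and i: "inv (w [^] i) \<otimes> x \<in> U" unfolding U'_def by blast
  have "x = w [^] i \<otimes> (inv (w [^] i) \<otimes> x)" using x wc by (simp add: cancel1)
  moreover have "w [^] i \<otimes> (inv (w [^] i) \<otimes> x) \<in> L" by (rule Lm[OF L_pow[OF w] subsetD[OF UL i]])
  ultimately show "x \<in> L" by simp
qed

lemma U_U': "U \<subseteq> U2"
proof
  fix x assume x: "x \<in> U"
  have "inv (w [^] (0::nat)) \<otimes> x \<in> U" using x Uc by simp
  thus "x \<in> U2" by (rule memU'[OF Uc[OF x]])
qed

lemma w_U': "w \<in> U2"
proof -
  have "inv (w [^] (1::nat)) \<otimes> w \<in> U" using wc U1 by simp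
  thus ?thesis by (rule memU'[OF wc])
qed

lemma U'_mult: assumes x: "x \<in> U2" and y: "y \<in> U2"
  shows "x \<otimes> y \<in> U2 \<and> \<beta>2 (x \<otimes> y) = \<beta>2 x * \<beta>2 y"
proof -
  obtain i::nat where xc: "x \<in> carrier G" and i: "inv (w [^] i) \<otimes> x \<in> U" using x unfolding U'_def by blast
  obtain j::nat where yc: "y \<in> carrier G" and j: "inv (w [^] j) \<otimes> y \<in> U" using y unfolding U'_def by blast
  define u where "u = inv (w [^] i) \<otimes> x"
  define v where "v = inv (w [^] j) \<otimes> y"
  have u: "u \<in> U" and v: "v \<in> U" using i j unfolding u_def v_def by auto
  have pc: "w [^] i \<in> carrier G" "w [^] j \<in> carrier G" using wc by auto
  have a: "inv (w [^] j) \<in> L" using Li[OF L_pow[OF w]] .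
  have e: "inv (w [^] (i + j)) \<otimes> (x \<otimes> y) = (inv (w [^] j) \<otimes> u \<otimes> inv (inv (w [^] j))) \<otimes> v"
  proof -
    have "w [^] (i + j) = w [^] i \<otimes> w [^] j" using wc by (simp add: nat_pow_mult)
    thus ?thesis unfolding u_def v_def using pc xc yc by (simp add: inv_mult_group m_assoc cancel1)
  qed
  have m: "inv (w [^] (i + j)) \<otimes> (x \<otimes> y) \<in> U" unfolding e by (rule Um[OF normU(1)[OF a u] v])
  have xyc: "x \<otimes> y \<in> carrier G" using xc yc by simp
  have xy: "x \<otimes> y \<in> U2" by (rule memU'[OF xyc m])
  have "\<beta>2 (x \<otimes> y) = c ^ (i + j) * \<beta> (inv (w [^] (i + j)) \<otimes> (x \<otimes> y))" by (rule b'_val[OF xyc m])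
  also have "\<dots> = c ^ i * c ^ j * (\<beta> u * \<beta> v)"
    unfolding e using bm[OF normU(1)[OF a u] v] normU(2)[OF a u] by (simp add: power_add)
  also have "\<dots> = \<beta>2 x * \<beta>2 y" using b'_val[OF xc i] b'_val[OF yc j] unfolding u_def v_def by simp
  finally show ?thesis using xy by simp
qed

lemma U'_subgroup: "subgroup U2 G"
proof (rule fin_subgroupI[OF fin])
  show "U2 \<subseteq> carrier G" unfolding U'_def by auto
  show "\<one> \<in> U2" by (rule subsetD[OF U_U' U1])
  show "\<And>x y. x \<in> U2 \<Longrightarrow> y \<in> U2 \<Longrightarrow> x \<otimes> y \<in> U2" using U'_mult by simp
qed

lemma b'_ext: "x \<in> U \<Longrightarrow> \<beta>2 x = \<beta> x"
  using b'_val[of x 0] Uc by simp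

lemma b'_w: "\<beta>2 w = c"
  using b'_val[OF wc, of 1] wc U1 b1 by simp

lemma step: "\<exists>U2 \<beta>2. subgroup U2 G \<and> U \<subseteq> U2 \<and> U2 \<subseteq> L \<and> w \<in> U2 \<and> homon U2 \<beta>2 \<and>
    (\<forall>x\<in>U. \<beta>2 x = \<beta> x) \<and> \<beta>2 w = c"
proof (rule exI[of _ U2], rule exI[of _ \<beta>2], intro conjI)
  show "homon U2 \<beta>2" unfolding homon_def using U'_mult by simp
qed (use U'_subgroup U_U' U'_L w_U' b'_ext b'_w in simp_all)

end
end

end

lemma complex_root_ex: assumes "0 < (n::nat)" shows "\<exists>c::complex. c ^ n = z"
proof (cases "z = 0")
  case True thus ?thesis using assms by (intro exI[of _ 0]) simp
next
  case False
  have b: "bij_betw (\<lambda>y. (root n (norm z) * cis (Arg z / n)) * y) {y. y ^ n = 1} {y. y ^ n = z}"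
    by (rule bij_betw_nth_root_unity[OF False assms])
  from bij_betwE[OF b] have "(\<lambda>y. (root n (norm z) * cis (Arg z / n)) * y) 1 \<in> {y. y ^ n = z}"
    by (rule bspec) simp
  thus ?thesis by (intro exI[of _ "root n (norm z) * cis (Arg z / n)"]) simp
qed

lemma root_unity_ne1: assumes "2 \<le> (n::nat)" shows "\<exists>c::complex. c ^ n = 1 \<and> c \<noteq> 1"
proof (rule ccontr)
  assume "\<not> ?thesis"
  hence "{c::complex. c ^ n = 1} \<subseteq> {1}" by auto
  hence "card {c::complex. c ^ n = 1} \<le> card {1::complex}" by (rule card_mono[rotated]) simp
  hence "card {c::complex. c ^ n = 1} \<le> 1" by simp
  thus False using card_roots_unity_eq[of n] assms by simp
qed

context sect begin

lemma rr_pos: assumes "U \<subseteq> carrier G" "\<one> \<in> U" "w \<in> carrier G"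
  shows "0 < rr G U w \<and> w [^] rr G U w \<in> U"
proof -
  have o: "order G > 0" using fin order_gt_0_iff_finite by blast
  have "w [^] order G = \<one>" by (rule pow_order_eq_1[OF assms(3)])
  hence "0 < order G \<and> w [^] order G \<in> U" using o assms(2) by simp
  thus ?thesis unfolding rr_def by (rule LeastI[where P="\<lambda>r. 0 < r \<and> w [^] r \<in> U"])
qed

lemma ext_all:
  assumes "subgroup U G" "H \<inter> L \<subseteq> U" "U \<subseteq> L" "homon U \<beta>" "\<And>k. k \<in> H \<inter> L \<Longrightarrow> \<beta> k = 1"
  shows "\<exists>\<alpha>\<in>chars G H L. \<forall>x\<in>U. \<alpha> x = \<beta> x"
  using assms
proof (induction "card (L - U)" arbitrary: U \<beta> rule: less_induct)
  case less
  show ?case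
  proof (cases "U = L")
    case True
    define \<alpha> where "\<alpha> = (\<lambda>x. if x \<in> L then \<beta> x else 0)"
    have "\<alpha> \<in> chars G H L" unfolding chars_def \<alpha>_def
      using less.prems(4,5) True Lm unfolding homon_def by auto
    moreover have "\<forall>x\<in>U. \<alpha> x = \<beta> x" unfolding \<alpha>_def using True by simp
    ultimately show ?thesis by blast
  next
    case False
    then obtain w where w: "w \<in> L" "w \<notin> U" using less.prems(3) by blast
    have U1: "\<one> \<in> U" using less.prems(2) oneK by blast
    have Uc: "U \<subseteq> carrier G" using less.prems(3) Lsub by blast
    have rp: "0 < rr G U w" using rr_pos[OF Uc U1 Lc[OF w(1)]] by simp
    obtain c where c: "c ^ rr G U w = \<beta> (w [^] rr G U w)" using complex_root_ex[OF rp] by blast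
    obtain V2 g2 where s: "subgroup V2 G" "U \<subseteq> V2" "V2 \<subseteq> L" "w \<in> V2" "homon V2 g2"
      "\<forall>x\<in>U. g2 x = \<beta> x" "g2 w = c"
      using step[OF less.prems w c] by blast
    have lt: "card (L - V2) < card (L - U)"
    proof (rule psubset_card_mono)
      show "finite (L - U)" using finL by simp
      show "L - V2 \<subset> L - U" using s(2) s(4) w by blast
    qed
    have K2: "\<And>k. k \<in> H \<inter> L \<Longrightarrow> g2 k = 1" using s(6) less.prems(2,5) by auto
    obtain \<alpha> where a: "\<alpha> \<in> chars G H L" "\<forall>x\<in>V2. \<alpha> x = g2 x"
      using less.hyps[OF lt s(1) subset_trans[OF less.prems(2) s(2)] s(3) s(5) K2] by blast
    have "\<forall>x\<in>U. \<alpha> x = \<beta> x"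
    proof
      fix x assume x: "x \<in> U"
      have "x \<in> V2" using x s(2) by blast
      thus "\<alpha> x = \<beta> x" using a(2) s(6) x by simp
    qed
    thus ?thesis using a(1) by blast
  qed
qed

lemma KL_subgroup: "subgroup (H \<inter> L) G"
  by (rule subgroups_Inter_pair[OF H L])

lemma separation: assumes v: "v \<in> L" "v \<notin> H" shows "\<exists>\<alpha>\<in>chars G H L. \<alpha> v \<noteq> 1"
proof -
  let ?U = "H \<inter> L"
  let ?\<beta> = "\<lambda>x::'a. 1::complex"
  have hom: "homon ?U ?\<beta>" unfolding homon_def by simp
  have vU: "v \<notin> ?U" using v by blast
  have Uc: "?U \<subseteq> carrier G" using Lsub by blast
  have rp: "0 < rr G ?U v \<and> v [^] rr G ?U v \<in> ?U" using rr_pos[OF Uc oneK Lc[OF v(1)]] .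
  have "rr G ?U v \<noteq> 1"
  proof
    assume "rr G ?U v = 1"
    thus False using rp vU Lc[OF v(1)] by simp
  qed
  hence r2: "2 \<le> rr G ?U v" using rp by linarith
  obtain c :: complex where c: "c ^ rr G ?U v = 1" "c \<noteq> 1" using root_unity_ne1[OF r2] by blast
  have bK1: "\<And>k. k \<in> ?U \<Longrightarrow> ?\<beta> k = 1" by simp
  have cr: "c ^ rr G ?U v = ?\<beta> (v [^] rr G ?U v)" using c(1) by simp
  have UL: "?U \<subseteq> L" by blast
  have KU: "H \<inter> L \<subseteq> ?U" by blast
  have ex: "\<exists>V2 g2. subgroup V2 G \<and> ?U \<subseteq> V2 \<and> V2 \<subseteq> L \<and> v \<in> V2 \<and> homon V2 g2 \<and>
      (\<forall>x\<in>?U. g2 x = ?\<beta> x) \<and> g2 v = c"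
    by (rule step[OF KL_subgroup KU UL hom bK1 v(1) vU cr])
  then obtain V2 g2 where s: "subgroup V2 G" "?U \<subseteq> V2" "V2 \<subseteq> L" "v \<in> V2" "homon V2 g2"
      "\<forall>x\<in>?U. g2 x = 1" "g2 v = c"
    by auto
  obtain \<alpha> where a: "\<alpha> \<in> chars G H L" "\<forall>x\<in>V2. \<alpha> x = g2 x"
    using ext_all[OF s(1) s(2) s(3) s(5)] s(6) by blast
  have "\<alpha> v = c" using a(2) s(4) s(7) by simp
  thus ?thesis using a(1) c(2) by blast
qed

definition "chinv \<alpha> = (\<lambda>x. if x \<in> L then \<alpha> (inv x) else 0)"

lemma chinv_ch: assumes a: "\<alpha> \<in> chars G H L" shows "chinv \<alpha> \<in> chars G H L"
  unfolding chars_def chinv_def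
proof (intro CollectI conjI ballI allI impI)
  fix x y assume xy: "x \<in> L" "y \<in> L"
  have "inv (x \<otimes> y) = inv y \<otimes> inv x" using xy Lc by (simp add: inv_mult_group)
  thus "(if x \<otimes> y \<in> L then \<alpha> (inv (x \<otimes> y)) else 0) = (if x \<in> L then \<alpha> (inv x) else 0) * (if y \<in> L then \<alpha> (inv y) else 0)"
    using xy Lm ch_mult[OF a Li[OF xy(2)] Li[OF xy(1)]] by simp
next
  fix k assume "k \<in> H \<inter> L"
  thus "(if k \<in> L then \<alpha> (inv k) else 0) = 1" using ch_K[OF a] Hi Li by simp
qed simp

lemma orth2: assumes z: "z \<in> L"
  shows "(\<Sum>\<alpha>\<in>chars G H L. \<alpha> z) = (if z \<in> H then of_nat (card (chars G H L)) else 0)"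
proof (cases "z \<in> H")
  case True
  have "(\<Sum>\<alpha>\<in>chars G H L. \<alpha> z) = (\<Sum>\<alpha>\<in>chars G H L. 1)"
    by (rule sum.cong) (use ch_K True z in auto)
  thus ?thesis using True by simp
next
  case False
  obtain a0 where a0: "a0 \<in> chars G H L" "a0 z \<noteq> 1" using separation[OF z False] by blast
  define f where "f = (\<lambda>\<alpha> x. a0 x * \<alpha> x)"
  have bij: "bij_betw f (chars G H L) (chars G H L)"
  proof (rule bij_betwI[where g="\<lambda>\<alpha> x. chinv a0 x * \<alpha> x"])
    show "f \<in> chars G H L \<rightarrow> chars G H L" unfolding f_def using mult_ch[OF a0(1)] by blast
    show "(\<lambda>\<alpha> x. chinv a0 x * \<alpha> x) \<in> chars G H L \<rightarrow> chars G H L" using mult_ch[OF chinv_ch[OF a0(1)]] by blast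
  next
    fix \<alpha> assume a: "\<alpha> \<in> chars G H L"
    show "(\<lambda>\<alpha> x. chinv a0 x * \<alpha> x) (f \<alpha>) = \<alpha>"
    proof
      fix x show "(\<lambda>\<alpha> x. chinv a0 x * \<alpha> x) (f \<alpha>) x = \<alpha> x"
        unfolding f_def chinv_def using ch_inv[OF a0(1), of x] ch_out[OF a, of x]
        by (cases "x \<in> L") (auto simp: algebra_simps)
    qed
    show "f ((\<lambda>\<alpha> x. chinv a0 x * \<alpha> x) \<alpha>) = \<alpha>"
    proof
      fix x show "f ((\<lambda>\<alpha> x. chinv a0 x * \<alpha> x) \<alpha>) x = \<alpha> x"
        unfolding f_def chinv_def using ch_inv[OF a0(1), of x] ch_out[OF a, of x]
        by (cases "x \<in> L") (auto simp: algebra_simps)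
    qed
  qed
  have "(\<Sum>\<alpha>\<in>chars G H L. \<alpha> z) = (\<Sum>\<alpha>\<in>chars G H L. f \<alpha> z)"
    using sum.reindex_bij_betw[OF bij, of "\<lambda>\<alpha>. \<alpha> z"] by simp
  also have "\<dots> = a0 z * (\<Sum>\<alpha>\<in>chars G H L. \<alpha> z)" unfolding f_def by (simp add: sum_distrib_left)
  finally have "(1 - a0 z) * (\<Sum>\<alpha>\<in>chars G H L. \<alpha> z) = 0" by (simp add: algebra_simps)
  thus ?thesis using a0 False by simp
qed

lemma ch_trivial: assumes a: "\<alpha> \<in> chars G H L" and t: "\<forall>m\<in>L. \<alpha> m = 1" shows "\<alpha> = oneL"
proof
  fix x show "\<alpha> x = oneL x" unfolding oneL_def using t ch_out[OF a] by auto
qed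

lemma card_chars: "card (chars G H L) * card (H \<inter> L) = card L"
proof -
  let ?A = "chars G H L"
  have fA: "finite ?A" by (rule finite_chars)
  have "(\<Sum>z\<in>L. \<Sum>\<alpha>\<in>?A. \<alpha> z) = (\<Sum>z\<in>L. if z \<in> H then of_nat (card ?A) else (0::complex))"
    by (rule sum.cong) (simp_all add: orth2)
  also have "\<dots> = of_nat (card ?A) * of_nat (card (L \<inter> H))"
    using finL by (simp add: sum.If_cases)
  finally have 1: "(\<Sum>z\<in>L. \<Sum>\<alpha>\<in>?A. \<alpha> z) = of_nat (card ?A * card (H \<inter> L))"
    by (simp add: Int_commute)
  have "(\<Sum>\<alpha>\<in>?A. \<Sum>z\<in>L. \<alpha> z) = (\<Sum>\<alpha>\<in>?A. if \<forall>m\<in>L. \<alpha> m = 1 then of_nat (card L) else (0::complex))"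
    by (rule sum.cong) (use orth1 ch_mult in auto)
  also have "\<dots> = (if \<forall>m\<in>L. oneL m = (1::complex) then of_nat (card L) else 0)
     + (\<Sum>\<alpha>\<in>?A - {oneL}. if \<forall>m\<in>L. \<alpha> m = 1 then of_nat (card L) else (0::complex))"
    by (rule sum.remove[OF fA oneL_ch, of "\<lambda>\<alpha>. if \<forall>m\<in>L. \<alpha> m = (1::complex) then of_nat (card L) else (0::complex)"])
  also have "(\<Sum>\<alpha>\<in>?A - {oneL}. if \<forall>m\<in>L. \<alpha> m = 1 then of_nat (card L) else (0::complex)) = 0"
    by (rule sum.neutral) (use ch_trivial in auto)
  also have "(if \<forall>m\<in>L. oneL m = (1::complex) then of_nat (card L) else 0) = (of_nat (card L) :: complex)"
    unfolding oneL_def by simp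
  also have "(of_nat (card L) :: complex) + 0 = of_nat (card L)" by simp
  finally have 2: "(\<Sum>\<alpha>\<in>?A. \<Sum>z\<in>L. \<alpha> z) = of_nat (card L)" by simp
  have "(\<Sum>z\<in>L. \<Sum>\<alpha>\<in>?A. \<alpha> z) = (\<Sum>\<alpha>\<in>?A. \<Sum>z\<in>L. \<alpha> z)" by (rule sum.swap)
  hence "(of_nat (card ?A * card (H \<inter> L)) :: complex) = of_nat (card L)" using 1 2 by simp
  thus ?thesis by (simp only: of_nat_eq_iff)
qed

end

context sect begin

definition "stab \<alpha> = {h \<in> H. \<forall>l\<in>L. \<alpha> (h \<otimes> l \<otimes> inv h) = (\<alpha> l :: complex)}"
definition "Sa \<alpha> = {y. \<exists>l\<in>L. \<exists>h\<in>stab \<alpha>. y = l \<otimes> h}"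
definition "exta \<alpha> y = (if y \<in> Sa \<alpha> then \<alpha> (SOME l. l \<in> L \<and> (\<exists>h\<in>stab \<alpha>. y = l \<otimes> h)) else (0::complex))"
definition "TT = {y. \<exists>l\<in>L. \<exists>h\<in>H. y = l \<otimes> h}"

lemma stab_sub: "stab \<alpha> \<subseteq> H" unfolding stab_def by blast

lemma normL: "h \<in> H \<Longrightarrow> l \<in> L \<Longrightarrow> h \<otimes> l \<otimes> inv h \<in> L" by (rule norm)

lemma K_stab: assumes a: "\<alpha> \<in> chars G H L" shows "H \<inter> L \<subseteq> stab \<alpha>"
proof
  fix k assume k: "k \<in> H \<inter> L"
  have "\<forall>l\<in>L. \<alpha> (k \<otimes> l \<otimes> inv k) = \<alpha> l"
  proof
    fix l assume l: "l \<in> L"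
    have c: "k \<otimes> l \<otimes> inv k \<otimes> inv l \<in> H \<inter> L" using commK k l by blast
    have e: "k \<otimes> l \<otimes> inv k = (k \<otimes> l \<otimes> inv k \<otimes> inv l) \<otimes> l"
      by (rule conj_decomp[OF Hc Lc[OF l]]) (use k in blast)
    have "\<alpha> (k \<otimes> l \<otimes> inv k) = \<alpha> ((k \<otimes> l \<otimes> inv k \<otimes> inv l) \<otimes> l)" by (rule arg_cong[OF e])
    also have "\<dots> = \<alpha> (k \<otimes> l \<otimes> inv k \<otimes> inv l) * \<alpha> l" using ch_mult[OF a _ l] c by blast
    also have "\<dots> = \<alpha> l" using ch_K[OF a] c by simp
    finally show "\<alpha> (k \<otimes> l \<otimes> inv k) = \<alpha> l" .
  qed
  thus "k \<in> stab \<alpha>" unfolding stab_def using k by blast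
qed

lemma stab_mult: assumes a: "\<alpha> \<in> chars G H L" and h: "h1 \<in> stab \<alpha>" "h2 \<in> stab \<alpha>"
  shows "h1 \<otimes> h2 \<in> stab \<alpha>"
proof -
  have hH: "h1 \<in> H" "h2 \<in> H" using h stab_sub by auto
  have hc: "h1 \<in> carrier G" "h2 \<in> carrier G" using hH Hc by auto
  have "\<forall>l\<in>L. \<alpha> ((h1 \<otimes> h2) \<otimes> l \<otimes> inv (h1 \<otimes> h2)) = \<alpha> l"
  proof
    fix l assume l: "l \<in> L"
    have e: "(h1 \<otimes> h2) \<otimes> l \<otimes> inv (h1 \<otimes> h2) = h1 \<otimes> (h2 \<otimes> l \<otimes> inv h2) \<otimes> inv h1"
      using hc Lc[OF l] by (simp add: inv_mult_group m_assoc)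
    have l2: "h2 \<otimes> l \<otimes> inv h2 \<in> L" by (rule normL[OF hH(2) l])
    show "\<alpha> ((h1 \<otimes> h2) \<otimes> l \<otimes> inv (h1 \<otimes> h2)) = \<alpha> l"
      unfolding e using h l2 l unfolding stab_def by simp
  qed
  thus ?thesis unfolding stab_def using Hm[OF hH] by blast
qed

lemma stab_subgroup: assumes a: "\<alpha> \<in> chars G H L" shows "subgroup (stab \<alpha>) G"
proof (rule fin_subgroupI[OF fin])
  show "stab \<alpha> \<subseteq> carrier G" using stab_sub Hsub by blast
  show "\<one> \<in> stab \<alpha>" using K_stab[OF a] oneK by blast
  show "\<And>x y. x \<in> stab \<alpha> \<Longrightarrow> y \<in> stab \<alpha> \<Longrightarrow> x \<otimes> y \<in> stab \<alpha>" by (rule stab_mult[OF a])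
qed

lemma stab_oneL: "stab oneL = H"
  unfolding stab_def oneL_def using normL by auto

lemma prod_rearr: assumes "l1 \<in> carrier G" "h1 \<in> carrier G" "l2 \<in> carrier G" "h2 \<in> carrier G"
  shows "(l1 \<otimes> h1) \<otimes> (l2 \<otimes> h2) = (l1 \<otimes> (h1 \<otimes> l2 \<otimes> inv h1)) \<otimes> (h1 \<otimes> h2)"
  using assms by (simp add: m_assoc cancel2)

lemma Sa_mult: assumes a: "\<alpha> \<in> chars G H L" and y: "y1 \<in> Sa \<alpha>" "y2 \<in> Sa \<alpha>"
  shows "y1 \<otimes> y2 \<in> Sa \<alpha>"
proof -
  obtain l1 h1 where 1: "l1 \<in> L" "h1 \<in> stab \<alpha>" "y1 = l1 \<otimes> h1" using y(1) unfolding Sa_def by blast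
  obtain l2 h2 where 2: "l2 \<in> L" "h2 \<in> stab \<alpha>" "y2 = l2 \<otimes> h2" using y(2) unfolding Sa_def by blast
  have h1H: "h1 \<in> H" using 1 stab_sub by blast
  have e: "y1 \<otimes> y2 = (l1 \<otimes> (h1 \<otimes> l2 \<otimes> inv h1)) \<otimes> (h1 \<otimes> h2)"
    unfolding 1(3) 2(3) by (rule prod_rearr[OF Lc[OF 1(1)] Hc[OF h1H] Lc[OF 2(1)] Hc]) (use 2 stab_sub in blast)
  have "l1 \<otimes> (h1 \<otimes> l2 \<otimes> inv h1) \<in> L" by (rule Lm[OF 1(1) normL[OF h1H 2(1)]])
  moreover have "h1 \<otimes> h2 \<in> stab \<alpha>" by (rule stab_mult[OF a 1(2) 2(2)])
  ultimately show ?thesis unfolding e Sa_def by blast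
qed

lemma Sa_sub: assumes a: "\<alpha> \<in> chars G H L" shows "Sa \<alpha> \<subseteq> carrier G"
proof
  fix y assume "y \<in> Sa \<alpha>"
  then obtain l h where "l \<in> L" "h \<in> stab \<alpha>" "y = l \<otimes> h" unfolding Sa_def by blast
  thus "y \<in> carrier G" using Lc Hc stab_sub by blast
qed

lemma one_Sa: assumes a: "\<alpha> \<in> chars G H L" shows "\<one> \<in> Sa \<alpha>"
proof -
  have "\<one> = \<one> \<otimes> \<one>" by simp
  moreover have "\<one> \<in> stab \<alpha>" using K_stab[OF a] oneK by blast
  ultimately show ?thesis unfolding Sa_def using oneK by blast
qed

lemma Sa_subgroup: assumes a: "\<alpha> \<in> chars G H L" shows "subgroup (Sa \<alpha>) G"
  by (rule fin_subgroupI[OF fin Sa_sub[OF a] one_Sa[OF a]]) (rule Sa_mult[OF a])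

lemma Sa_TT: "Sa \<alpha> \<subseteq> TT" unfolding Sa_def TT_def using stab_sub by blast

lemma TT_eq: "Sa oneL = TT" unfolding Sa_def TT_def stab_oneL ..

lemma decomp_unique: assumes "l \<in> L" "l' \<in> L" "h \<in> H" "h' \<in> H" "l \<otimes> h = l' \<otimes> h'"
  shows "inv l' \<otimes> l \<in> H \<inter> L" "h' = (inv l' \<otimes> l) \<otimes> h"
proof -
  have c: "l \<in> carrier G" "l' \<in> carrier G" "h \<in> carrier G" "h' \<in> carrier G" using assms Lc Hc by auto
  have e1: "inv l' \<otimes> l = h' \<otimes> inv h"
  proof -
    have "inv l' \<otimes> (l \<otimes> h) \<otimes> inv h = inv l' \<otimes> (l' \<otimes> h') \<otimes> inv h" using assms(5) by simp
    thus ?thesis using c by (simp add: m_assoc cancel2)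
  qed
  have "h' \<otimes> inv h \<in> H" using Hm[OF assms(4) Hi[OF assms(3)]] .
  moreover have "inv l' \<otimes> l \<in> L" using Lm[OF Li[OF assms(2)] assms(1)] .
  ultimately show "inv l' \<otimes> l \<in> H \<inter> L" using e1 by simp
  show "h' = (inv l' \<otimes> l) \<otimes> h" unfolding e1 using c by (simp add: m_assoc)
qed

lemma exta_val: assumes a: "\<alpha> \<in> chars G H L" and l: "l \<in> L" and h: "h \<in> H"
  shows "exta \<alpha> (l \<otimes> h) = (if h \<in> stab \<alpha> then \<alpha> l else 0)"
proof (cases "h \<in> stab \<alpha>")
  case True
  have yS: "l \<otimes> h \<in> Sa \<alpha>" unfolding Sa_def using l True by blast
  let ?l = "SOME l'. l' \<in> L \<and> (\<exists>h'\<in>stab \<alpha>. l \<otimes> h = l' \<otimes> h')"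
  have "?l \<in> L \<and> (\<exists>h'\<in>stab \<alpha>. l \<otimes> h = ?l \<otimes> h')"
    by (rule someI[of _ l]) (use l True in blast)
  then obtain h' where l': "?l \<in> L" "h' \<in> stab \<alpha>" "l \<otimes> h = ?l \<otimes> h'" by blast
  have k: "inv ?l \<otimes> l \<in> H \<inter> L" using decomp_unique(1)[OF l l'(1) h _ l'(3)] l'(2) stab_sub by blast
  have "\<alpha> l = \<alpha> (?l \<otimes> (inv ?l \<otimes> l))" using Lc[OF l] Lc[OF l'(1)] by (simp add: cancel1)
  also have "\<dots> = \<alpha> ?l * \<alpha> (inv ?l \<otimes> l)" using ch_mult[OF a l'(1)] k by blast
  also have "\<dots> = \<alpha> ?l" using ch_K[OF a] k by simp
  finally show ?thesis unfolding exta_def using yS True by simp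
next
  case False
  have "l \<otimes> h \<notin> Sa \<alpha>"
  proof
    assume "l \<otimes> h \<in> Sa \<alpha>"
    then obtain l' h' where l': "l' \<in> L" "h' \<in> stab \<alpha>" "l \<otimes> h = l' \<otimes> h'" unfolding Sa_def by blast
    have h'H: "h' \<in> H" using l'(2) stab_sub by blast
    have "h = (inv l \<otimes> l') \<otimes> h'" by (rule decomp_unique(2)[OF l'(1) l h'H h l'(3)[symmetric]])
    moreover have "inv l \<otimes> l' \<in> H \<inter> L" by (rule decomp_unique(1)[OF l'(1) l h'H h l'(3)[symmetric]])
    ultimately have "h \<in> stab \<alpha>" using stab_mult[OF a _ l'(2)] K_stab[OF a] by auto
    thus False using False by simp
  qed
  thus ?thesis unfolding exta_def using False by simp
qed

lemma exta_out: "y \<notin> Sa \<alpha> \<Longrightarrow> exta \<alpha> y = 0" unfolding exta_def by simp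

lemma exta_mult: assumes a: "\<alpha> \<in> chars G H L" and y: "y1 \<in> Sa \<alpha>" "y2 \<in> Sa \<alpha>"
  shows "exta \<alpha> (y1 \<otimes> y2) = exta \<alpha> y1 * exta \<alpha> y2"
proof -
  obtain l1 h1 where 1: "l1 \<in> L" "h1 \<in> stab \<alpha>" "y1 = l1 \<otimes> h1" using y(1) unfolding Sa_def by blast
  obtain l2 h2 where 2: "l2 \<in> L" "h2 \<in> stab \<alpha>" "y2 = l2 \<otimes> h2" using y(2) unfolding Sa_def by blast
  have h1H: "h1 \<in> H" and h2H: "h2 \<in> H" using 1 2 stab_sub by auto
  have e: "y1 \<otimes> y2 = (l1 \<otimes> (h1 \<otimes> l2 \<otimes> inv h1)) \<otimes> (h1 \<otimes> h2)"
    unfolding 1(3) 2(3) by (rule prod_rearr[OF Lc[OF 1(1)] Hc[OF h1H] Lc[OF 2(1)] Hc[OF h2H]])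
  have lL: "h1 \<otimes> l2 \<otimes> inv h1 \<in> L" by (rule normL[OF h1H 2(1)])
  have s12: "h1 \<otimes> h2 \<in> stab \<alpha>" by (rule stab_mult[OF a 1(2) 2(2)])
  have "exta \<alpha> (y1 \<otimes> y2) = \<alpha> (l1 \<otimes> (h1 \<otimes> l2 \<otimes> inv h1))"
    unfolding e using exta_val[OF a Lm[OF 1(1) lL] Hm[OF h1H h2H]] s12 by simp
  also have "\<dots> = \<alpha> l1 * \<alpha> l2" using ch_mult[OF a 1(1) lL] 1(2) 2(1) unfolding stab_def by simp
  also have "\<dots> = exta \<alpha> y1 * exta \<alpha> y2"
    unfolding 1(3) 2(3) using exta_val[OF a 1(1) h1H] exta_val[OF a 2(1) h2H] 1(2) 2(2) by simp
  finally show ?thesis .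
qed

lemma exta_one: assumes a: "\<alpha> \<in> chars G H L" shows "exta \<alpha> \<one> = 1"
proof -
  have o: "\<one> \<in> L" "\<one> \<in> H" "\<one> \<in> stab \<alpha>" using oneK K_stab[OF a] by auto
  have "exta \<alpha> (\<one> \<otimes> \<one>) = \<alpha> \<one>"
    using exta_val[OF a o(1) o(2)] o(3) by simp
  thus ?thesis using ch_one[OF a] by simp
qed

end

lemma sum_ind_card: "finite L \<Longrightarrow> (\<Sum>m\<in>L. if P m then 1 else 0) = (of_nat (card {m\<in>L. P m}) :: 'a::semiring_1)"
  by (simp add: sum.If_cases Int_def)

context sect begin

lemma Phi: assumes y: "y \<in> carrier G"
  shows "of_nat (card L) * (\<Sum>\<alpha>\<in>chars G H L. exta \<alpha> y)
       = of_nat (card (chars G H L)) * of_nat (card {m\<in>L. m \<otimes> y \<otimes> inv m \<in> H})"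
proof (cases "y \<in> TT")
  case False
  have s0: "(\<Sum>\<alpha>\<in>chars G H L. exta \<alpha> y) = 0"
    by (rule sum.neutral) (use False Sa_TT exta_out in blast)
  have e0: "{m\<in>L. m \<otimes> y \<otimes> inv m \<in> H} = {}"
  proof (rule ccontr)
    assume "{m\<in>L. m \<otimes> y \<otimes> inv m \<in> H} \<noteq> {}"
    then obtain m where m: "m \<in> L" "m \<otimes> y \<otimes> inv m \<in> H" by blast
    define h where "h = m \<otimes> y \<otimes> inv m"
    have mc: "m \<in> carrier G" using Lc[OF m(1)] .
    have hH: "h \<in> H" using m(2) unfolding h_def .
    have e: "y = (inv m \<otimes> (h \<otimes> m \<otimes> inv h)) \<otimes> h"
      unfolding h_def using mc y by (simp add: m_assoc inv_mult_group cancel2)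
    have "inv m \<otimes> (h \<otimes> m \<otimes> inv h) \<in> L" by (rule Lm[OF Li[OF m(1)] normL[OF hH m(1)]])
    hence "y \<in> TT" unfolding TT_def using e hH by blast
    thus False using False by simp
  qed
  show ?thesis unfolding e0 s0 by simp
next
  case True
  then obtain l h where lh: "l \<in> L" "h \<in> H" "y = l \<otimes> h" unfolding TT_def by blast
  have lc: "l \<in> carrier G" and hc: "h \<in> carrier G" using lh Lc Hc by auto
  let ?A = "chars G H L"
  define zz where "zz = (\<lambda>m. m \<otimes> l \<otimes> (h \<otimes> inv m \<otimes> inv h))"
  have zzL: "zz m \<in> L" if m: "m \<in> L" for m
    unfolding zz_def by (rule Lm[OF Lm[OF m lh(1)] normL[OF lh(2) Li[OF m]]])
  have mem: "m \<otimes> y \<otimes> inv m \<in> H \<longleftrightarrow> zz m \<in> H" if m: "m \<in> L" for m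
  proof -
    have mc: "m \<in> carrier G" using Lc[OF m] .
    have e: "m \<otimes> y \<otimes> inv m = zz m \<otimes> h" unfolding zz_def lh(3) using mc lc hc by (simp add: m_assoc)
    have zc: "zz m \<in> carrier G" using Lc[OF zzL[OF m]] .
    show ?thesis
    proof
      assume "m \<otimes> y \<otimes> inv m \<in> H"
      hence "(zz m \<otimes> h) \<otimes> inv h \<in> H" unfolding e using Hm Hi lh(2) by blast
      thus "zz m \<in> H" using zc hc by (simp add: m_assoc)
    next
      assume "zz m \<in> H" thus "m \<otimes> y \<otimes> inv m \<in> H" unfolding e using Hm lh(2) by blast
    qed
  qed
  have S1: "(\<Sum>\<alpha>\<in>?A. exta \<alpha> y) = (\<Sum>\<alpha>\<in>?A. if h \<in> stab \<alpha> then \<alpha> l else 0)"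
    by (rule sum.cong) (simp_all add: lh(3) exta_val[OF _ lh(1) lh(2)])
  have "{m\<in>L. m \<otimes> y \<otimes> inv m \<in> H} = {m\<in>L. zz m \<in> H}" using mem by blast
  hence "of_nat (card {m\<in>L. m \<otimes> y \<otimes> inv m \<in> H}) = (\<Sum>m\<in>L. if zz m \<in> H then 1 else (0::complex))"
    by (simp add: sum_ind_card[OF finL, of "\<lambda>m. zz m \<in> H"])
  hence "of_nat (card ?A) * of_nat (card {m\<in>L. m \<otimes> y \<otimes> inv m \<in> H})
      = (\<Sum>m\<in>L. of_nat (card ?A) * (if zz m \<in> H then 1 else (0::complex)))"
    by (simp add: sum_distrib_left)
  also have "\<dots> = (\<Sum>m\<in>L. \<Sum>\<alpha>\<in>?A. \<alpha> (zz m))"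
    by (rule sum.cong[OF refl]) (simp add: orth2[OF zzL])
  also have "\<dots> = (\<Sum>m\<in>L. \<Sum>\<alpha>\<in>?A. \<alpha> l * (\<alpha> m * \<alpha> (h \<otimes> inv m \<otimes> inv h)))"
  proof (rule sum.cong[OF refl], rule sum.cong[OF refl])
    fix m \<alpha> assume m: "m \<in> L" and a: "\<alpha> \<in> ?A"
    have hm: "h \<otimes> inv m \<otimes> inv h \<in> L" by (rule normL[OF lh(2) Li[OF m]])
    show "\<alpha> (zz m) = \<alpha> l * (\<alpha> m * \<alpha> (h \<otimes> inv m \<otimes> inv h))"
      unfolding zz_def using ch_mult[OF a Lm[OF m lh(1)] hm] ch_mult[OF a m lh(1)] by simp
  qed
  also have "\<dots> = (\<Sum>\<alpha>\<in>?A. \<alpha> l * (\<Sum>m\<in>L. \<alpha> m * \<alpha> (h \<otimes> inv m \<otimes> inv h)))"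
    by (subst sum.swap) (simp add: sum_distrib_left)
  also have "\<dots> = (\<Sum>\<alpha>\<in>?A. \<alpha> l * (if h \<in> stab \<alpha> then of_nat (card L) else 0))"
  proof (rule sum.cong[OF refl])
    fix \<alpha> assume a: "\<alpha> \<in> ?A"
    define \<beta> where "\<beta> = (\<lambda>m. \<alpha> m * \<alpha> (h \<otimes> inv m \<otimes> inv h))"
    have hom: "\<beta> (x \<otimes> y) = \<beta> x * \<beta> y" if xy: "x \<in> L" "y \<in> L" for x y
    proof -
      have xc: "x \<in> carrier G" "y \<in> carrier G" using xy Lc by auto
      have e: "h \<otimes> inv (x \<otimes> y) \<otimes> inv h = (h \<otimes> inv y \<otimes> inv h) \<otimes> (h \<otimes> inv x \<otimes> inv h)"
        using xc hc by (simp add: inv_mult_group m_assoc cancel2)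
      have hx: "h \<otimes> inv x \<otimes> inv h \<in> L" "h \<otimes> inv y \<otimes> inv h \<in> L"
        using normL[OF lh(2) Li[OF xy(1)]] normL[OF lh(2) Li[OF xy(2)]] by auto
      show ?thesis unfolding \<beta>_def e using ch_mult[OF a xy] ch_mult[OF a hx(2) hx(1)] by simp
    qed
    have iff: "(\<forall>m\<in>L. \<beta> m = 1) \<longleftrightarrow> h \<in> stab \<alpha>"
    proof
      assume all: "\<forall>m\<in>L. \<beta> m = 1"
      have "\<forall>l'\<in>L. \<alpha> (h \<otimes> l' \<otimes> inv h) = \<alpha> l'"
      proof
        fix l' assume l': "l' \<in> L"
        have "\<beta> (inv l') = 1" using all Li[OF l'] by blast
        hence "\<alpha> (inv l') * \<alpha> (h \<otimes> l' \<otimes> inv h) = 1" unfolding \<beta>_def using Lc[OF l'] by simp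
        moreover have "\<alpha> l' * \<alpha> (inv l') = 1" by (rule ch_inv[OF a l'])
        ultimately show "\<alpha> (h \<otimes> l' \<otimes> inv h) = \<alpha> l'"
          by (metis mult.assoc mult.commute mult.right_neutral)
      qed
      thus "h \<in> stab \<alpha>" unfolding stab_def using lh(2) by blast
    next
      assume hs: "h \<in> stab \<alpha>"
      show "\<forall>m\<in>L. \<beta> m = 1"
      proof
        fix m assume m: "m \<in> L"
        have "\<alpha> (h \<otimes> inv m \<otimes> inv h) = \<alpha> (inv m)" using hs Li[OF m] unfolding stab_def by blast
        thus "\<beta> m = 1" unfolding \<beta>_def using ch_inv[OF a m] by simp
      qed
    qed
    show "\<alpha> l * (\<Sum>m\<in>L. \<alpha> m * \<alpha> (h \<otimes> inv m \<otimes> inv h)) = \<alpha> l * (if h \<in> stab \<alpha> then of_nat (card L) else 0)"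
      using orth1[of \<beta>, OF hom] iff unfolding \<beta>_def by simp
  qed
  also have "\<dots> = of_nat (card L) * (\<Sum>\<alpha>\<in>?A. if h \<in> stab \<alpha> then \<alpha> l else 0)"
    by (simp add: sum_distrib_left if_distrib mult.commute cong: if_cong)
  finally show ?thesis using S1 by simp
qed

end

context sect begin

lemma card_TT: "card TT * card (H \<inter> L) = card L * card H"
proof -
  define fib where "fib = (\<lambda>y. {p \<in> L \<times> H. fst p \<otimes> snd p = y})"
  have U: "L \<times> H = (\<Union>y\<in>TT. fib y)"
  proof
    show "L \<times> H \<subseteq> (\<Union>y\<in>TT. fib y)"
    proof
      fix p assume p: "p \<in> L \<times> H"
      then obtain a b where ab: "p = (a, b)" "a \<in> L" "b \<in> H" by blast
      have "a \<otimes> b \<in> TT" unfolding TT_def using ab by blast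
      moreover have "p \<in> fib (a \<otimes> b)" unfolding fib_def using ab by simp
      ultimately show "p \<in> (\<Union>y\<in>TT. fib y)" by blast
    qed
    show "(\<Union>y\<in>TT. fib y) \<subseteq> L \<times> H" unfolding fib_def by blast
  qed
  have TTsub: "TT \<subseteq> carrier G"
  proof
    fix y assume "y \<in> TT"
    then obtain l h where "l \<in> L" "h \<in> H" "y = l \<otimes> h" unfolding TT_def by blast
    thus "y \<in> carrier G" using Lc Hc by simp
  qed
  have fT: "finite TT" by (rule finite_subset[OF TTsub fin])
  have ffib: "finite (fib y)" for y unfolding fib_def using finL finH by simp
  have cf: "card (fib y) = card (H \<inter> L)" if y: "y \<in> TT" for y
  proof -
    obtain l0 h0 where lh: "l0 \<in> L" "h0 \<in> H" "y = l0 \<otimes> h0" using y unfolding TT_def by blast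
    have c0: "l0 \<in> carrier G" "h0 \<in> carrier G" using lh Lc Hc by auto
    have "bij_betw (\<lambda>k. (l0 \<otimes> k, inv k \<otimes> h0)) (H \<inter> L) (fib y)"
    proof (rule bij_betwI[where g="\<lambda>p. inv l0 \<otimes> fst p"])
      show "(\<lambda>k. (l0 \<otimes> k, inv k \<otimes> h0)) \<in> H \<inter> L \<rightarrow> fib y"
      proof
        fix k assume k: "k \<in> H \<inter> L"
        have kc: "k \<in> carrier G" using k Lc by blast
        have "l0 \<otimes> k \<in> L" using Lm[OF lh(1)] k by blast
        moreover have "inv k \<otimes> h0 \<in> H" using Hm[OF Hi lh(2)] k by blast
        moreover have "(l0 \<otimes> k) \<otimes> (inv k \<otimes> h0) = y" unfolding lh(3) using c0 kc by (simp add: m_assoc cancel1)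
        ultimately show "(l0 \<otimes> k, inv k \<otimes> h0) \<in> fib y" unfolding fib_def by simp
      qed
      show "(\<lambda>p. inv l0 \<otimes> fst p) \<in> fib y \<rightarrow> H \<inter> L"
      proof
        fix p assume "p \<in> fib y"
        then obtain l h where p: "p = (l, h)" "l \<in> L" "h \<in> H" "l \<otimes> h = y" unfolding fib_def by auto
        show "inv l0 \<otimes> fst p \<in> H \<inter> L"
          using decomp_unique(1)[OF p(2) lh(1) p(3) lh(2)] p(4) lh(3) p(1) by simp
      qed
      show "inv l0 \<otimes> fst (l0 \<otimes> k, inv k \<otimes> h0) = k" if "k \<in> H \<inter> L" for k
        using c0 that Lc by (simp add: cancel2)
      show "(l0 \<otimes> (inv l0 \<otimes> fst p), inv (inv l0 \<otimes> fst p) \<otimes> h0) = p" if p: "p \<in> fib y" for p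
      proof -
        obtain l h where p: "p = (l, h)" "l \<in> L" "h \<in> H" "l \<otimes> h = y" using p unfolding fib_def by auto
        have "h = (inv l \<otimes> l0) \<otimes> h0" by (rule decomp_unique(2)[OF lh(1) p(2) lh(2) p(3)]) (use p(4) lh(3) in simp)
        moreover have "inv (inv l0 \<otimes> l) \<otimes> h0 = (inv l \<otimes> l0) \<otimes> h0"
          using c0 Lc[OF p(2)] by (simp add: inv_mult_group)
        ultimately show ?thesis using p c0 Lc[OF p(2)] by (simp add: cancel1)
      qed
    qed
    thus ?thesis by (simp add: bij_betw_same_card)
  qed
  have disj: "\<forall>y\<in>TT. \<forall>y'\<in>TT. y \<noteq> y' \<longrightarrow> fib y \<inter> fib y' = {}" unfolding fib_def by auto
  have "card L * card H = card (L \<times> H)" by (simp add: card_cartesian_product)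
  also have "\<dots> = (\<Sum>y\<in>TT. card (fib y))" unfolding U by (rule card_UN_disjoint[OF fT]) (use ffib disj in auto)
  also have "\<dots> = (\<Sum>y\<in>TT. card (H \<inter> L))" by (rule sum.cong) (simp_all add: cf)
  finally show ?thesis by simp
qed

context
  fixes \<chi> :: "'a \<Rightarrow> complex"
  assumes chi1: "\<chi> \<one> = 1" and chim: "\<And>x y. x \<in> carrier G \<Longrightarrow> y \<in> carrier G \<Longrightarrow> \<chi> (x \<otimes> y) = \<chi> x * \<chi> y"
begin

lemma chi_conj: assumes "m \<in> carrier G" "y \<in> carrier G" shows "\<chi> (m \<otimes> y \<otimes> inv m) = \<chi> y"
proof -
  have "\<chi> m * \<chi> (inv m) = 1" using chim[of m "inv m"] assms chi1 by simp
  moreover have "\<chi> (m \<otimes> y \<otimes> inv m) = \<chi> m * \<chi> y * \<chi> (inv m)" using assms chim by simp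
  ultimately show ?thesis by (simp add: algebra_simps)
qed

lemma main_id: assumes g: "g \<in> carrier G"
  shows "(\<Sum>\<alpha>\<in>chars G H L. of_nat (card (Sa \<alpha>)) * induce G (Sa \<alpha>) (\<lambda>y. \<chi> y * exta \<alpha> y) g)
       = of_nat (card (chars G H L)) * of_nat (card H) * induce G H (restrict_char H \<chi>) g"
proof -
  let ?A = "chars G H L"
  define Y where "Y = (\<lambda>x. x \<otimes> g \<otimes> inv x)"
  have Yc: "Y x \<in> carrier G" if "x \<in> carrier G" for x unfolding Y_def using g that by simp
  define F where "F = (\<lambda>x. if Y x \<in> H then \<chi> (Y x) else 0)"
  have a: "of_nat (card (Sa \<alpha>)) * induce G (Sa \<alpha>) (\<lambda>y. \<chi> y * exta \<alpha> y) g = (\<Sum>x\<in>carrier G. \<chi> (Y x) * exta \<alpha> (Y x))"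
    if al: "\<alpha> \<in> ?A" for \<alpha>
  proof -
    have fS: "finite (Sa \<alpha>)" using finite_subset[OF Sa_sub[OF al] fin] .
    have cS: "card (Sa \<alpha>) > 0" using fS one_Sa[OF al] card_gt_0_iff by blast
    have "(\<Sum>x\<in>carrier G. (let y = x \<otimes> g \<otimes> inv x in if y \<in> Sa \<alpha> then \<chi> y * exta \<alpha> y else 0))
        = (\<Sum>x\<in>carrier G. \<chi> (Y x) * exta \<alpha> (Y x))"
      by (rule sum.cong) (auto simp: Y_def Let_def exta_out)
    thus ?thesis unfolding induce_def using g cS by simp
  qed
  have "(\<Sum>\<alpha>\<in>?A. of_nat (card (Sa \<alpha>)) * induce G (Sa \<alpha>) (\<lambda>y. \<chi> y * exta \<alpha> y) g)
      = (\<Sum>\<alpha>\<in>?A. \<Sum>x\<in>carrier G. \<chi> (Y x) * exta \<alpha> (Y x))" by (rule sum.cong) (simp_all add: a)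
  also have "\<dots> = (\<Sum>x\<in>carrier G. \<chi> (Y x) * (\<Sum>\<alpha>\<in>?A. exta \<alpha> (Y x)))"
    by (subst sum.swap) (simp add: sum_distrib_left)
  finally have L1: "(\<Sum>\<alpha>\<in>?A. of_nat (card (Sa \<alpha>)) * induce G (Sa \<alpha>) (\<lambda>y. \<chi> y * exta \<alpha> y) g)
      = (\<Sum>x\<in>carrier G. \<chi> (Y x) * (\<Sum>\<alpha>\<in>?A. exta \<alpha> (Y x)))" .
  have "of_nat (card L) * (\<Sum>x\<in>carrier G. \<chi> (Y x) * (\<Sum>\<alpha>\<in>?A. exta \<alpha> (Y x)))
      = (\<Sum>x\<in>carrier G. \<chi> (Y x) * (of_nat (card L) * (\<Sum>\<alpha>\<in>?A. exta \<alpha> (Y x))))"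
    by (simp add: sum_distrib_left algebra_simps)
  also have "\<dots> = (\<Sum>x\<in>carrier G. \<chi> (Y x) * (of_nat (card ?A) * of_nat (card {m\<in>L. m \<otimes> Y x \<otimes> inv m \<in> H})))"
    by (rule sum.cong[OF refl]) (simp add: Phi[OF Yc])
  also have "\<dots> = of_nat (card ?A) * (\<Sum>x\<in>carrier G. \<Sum>m\<in>L. if m \<otimes> Y x \<otimes> inv m \<in> H then \<chi> (m \<otimes> Y x \<otimes> inv m) else 0)"
  proof -
    have "\<chi> (Y x) * of_nat (card {m\<in>L. m \<otimes> Y x \<otimes> inv m \<in> H})
        = (\<Sum>m\<in>L. if m \<otimes> Y x \<otimes> inv m \<in> H then \<chi> (m \<otimes> Y x \<otimes> inv m) else 0)" if x: "x \<in> carrier G" for x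
    proof -
      have "\<chi> (Y x) * of_nat (card {m\<in>L. m \<otimes> Y x \<otimes> inv m \<in> H})
          = \<chi> (Y x) * (\<Sum>m\<in>L. if m \<otimes> Y x \<otimes> inv m \<in> H then 1 else 0)"
        by (simp add: sum_ind_card[OF finL])
      also have "\<dots> = (\<Sum>m\<in>L. if m \<otimes> Y x \<otimes> inv m \<in> H then \<chi> (Y x) else 0)"
        unfolding sum_distrib_left by (rule sum.cong) auto
      also have "\<dots> = (\<Sum>m\<in>L. if m \<otimes> Y x \<otimes> inv m \<in> H then \<chi> (m \<otimes> Y x \<otimes> inv m) else 0)"
        by (rule sum.cong[OF refl]) (simp add: chi_conj[OF Lc Yc[OF x]])
      finally show ?thesis .
    qed
    hence eqx: "\<And>x. x \<in> carrier G \<Longrightarrow> \<chi> (Y x) * of_nat (card {m\<in>L. m \<otimes> Y x \<otimes> inv m \<in> H})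
        = (\<Sum>m\<in>L. if m \<otimes> Y x \<otimes> inv m \<in> H then \<chi> (m \<otimes> Y x \<otimes> inv m) else 0)" .
    have "(\<Sum>x\<in>carrier G. \<chi> (Y x) * (of_nat (card ?A) * of_nat (card {m\<in>L. m \<otimes> Y x \<otimes> inv m \<in> H})))
        = of_nat (card ?A) * (\<Sum>x\<in>carrier G. \<chi> (Y x) * of_nat (card {m\<in>L. m \<otimes> Y x \<otimes> inv m \<in> H}))"
      by (simp add: sum_distrib_left mult.left_commute)
    also have "(\<Sum>x\<in>carrier G. \<chi> (Y x) * of_nat (card {m\<in>L. m \<otimes> Y x \<otimes> inv m \<in> H}))
        = (\<Sum>x\<in>carrier G. \<Sum>m\<in>L. if m \<otimes> Y x \<otimes> inv m \<in> H then \<chi> (m \<otimes> Y x \<otimes> inv m) else 0)"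
      by (rule sum.cong[OF refl]) (rule eqx)
    finally show ?thesis .
  qed
  also have "\<dots> = of_nat (card ?A) * (\<Sum>m\<in>L. \<Sum>x\<in>carrier G. F (m \<otimes> x))"
  proof -
    have "(\<Sum>x\<in>carrier G. \<Sum>m\<in>L. if m \<otimes> Y x \<otimes> inv m \<in> H then \<chi> (m \<otimes> Y x \<otimes> inv m) else 0)
        = (\<Sum>m\<in>L. \<Sum>x\<in>carrier G. if m \<otimes> Y x \<otimes> inv m \<in> H then \<chi> (m \<otimes> Y x \<otimes> inv m) else 0)"
      by (rule sum.swap)
    also have "\<dots> = (\<Sum>m\<in>L. \<Sum>x\<in>carrier G. F (m \<otimes> x))"
    proof (rule sum.cong[OF refl], rule sum.cong[OF refl])
      fix m x assume m: "m \<in> L" and x: "x \<in> carrier G"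
      have "m \<otimes> Y x \<otimes> inv m = Y (m \<otimes> x)" unfolding Y_def using Lc[OF m] x g by (simp add: m_assoc inv_mult_group)
      thus "(if m \<otimes> Y x \<otimes> inv m \<in> H then \<chi> (m \<otimes> Y x \<otimes> inv m) else 0) = F (m \<otimes> x)" unfolding F_def by simp
    qed
    finally show ?thesis by simp
  qed
  also have "\<dots> = of_nat (card ?A) * (\<Sum>m\<in>L. \<Sum>x\<in>carrier G. F x)"
  proof -
    have "(\<Sum>x\<in>carrier G. F (m \<otimes> x)) = (\<Sum>x\<in>carrier G. F x)" if m: "m \<in> L" for m
      using sum.reindex_bij_betw[OF lmult_bij[OF Lc[OF m]], of F] by simp
    thus ?thesis by simp
  qed
  also have "\<dots> = of_nat (card ?A) * of_nat (card L) * (\<Sum>x\<in>carrier G. F x)" by simp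
  finally have L2: "of_nat (card L) * (\<Sum>x\<in>carrier G. \<chi> (Y x) * (\<Sum>\<alpha>\<in>?A. exta \<alpha> (Y x)))
     = of_nat (card L) * (of_nat (card ?A) * (\<Sum>x\<in>carrier G. F x))" by (simp add: algebra_simps)
  have cL: "card L > 0" using finL oneK card_gt_0_iff by blast
  have cH: "card H > 0" using finH oneK card_gt_0_iff by blast
  have R: "induce G H (restrict_char H \<chi>) g = (1 / of_nat (card H)) * (\<Sum>x\<in>carrier G. F x)"
  proof -
    have "(\<Sum>x\<in>carrier G. (let y = x \<otimes> g \<otimes> inv x in if y \<in> H then restrict_char H \<chi> y else 0)) = (\<Sum>x\<in>carrier G. F x)"
      by (rule sum.cong) (auto simp: F_def Y_def Let_def restrict_char_def)
    thus ?thesis unfolding induce_def using g by simp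
  qed
  show ?thesis using L1 L2 cL cH R by simp
qed

end
end

context sect begin

context
  fixes \<chi> :: "'a \<Rightarrow> complex"
  assumes chi1: "\<chi> \<one> = 1" and chim: "\<And>x y. x \<in> carrier G \<Longrightarrow> y \<in> carrier G \<Longrightarrow> \<chi> (x \<otimes> y) = \<chi> x * \<chi> y"
begin

lemma psi_lin: assumes a: "\<alpha> \<in> chars G H L"
  shows "is_linear_character G (Sa \<alpha>) (\<lambda>y. \<chi> y * exta \<alpha> y)"
  unfolding lin_char_iff[OF Sa_subgroup[OF a]]
proof (intro conjI ballI allI impI)
  show "\<chi> \<one> * exta \<alpha> \<one> = 1" using chi1 exta_one[OF a] by simp
next
  fix x y assume xy: "x \<in> Sa \<alpha>" "y \<in> Sa \<alpha>"
  have c: "x \<in> carrier G" "y \<in> carrier G" using xy Sa_sub[OF a] by auto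
  show "\<chi> (x \<otimes> y) * exta \<alpha> (x \<otimes> y) = \<chi> x * exta \<alpha> x * (\<chi> y * exta \<alpha> y)"
    using chim[OF c] exta_mult[OF a xy] by simp
next
  fix x assume "x \<notin> Sa \<alpha>" thus "\<chi> x * exta \<alpha> x = 0" using exta_out by simp
qed

lemma psi_hom: assumes a: "\<alpha> \<in> chars G H L"
  shows "(\<lambda>y. \<chi> y * exta \<alpha> y) \<one> = 1"
    "\<And>x y. x \<in> Sa \<alpha> \<Longrightarrow> y \<in> Sa \<alpha> \<Longrightarrow> (\<lambda>y. \<chi> y * exta \<alpha> y) (x \<otimes> y) = (\<lambda>y. \<chi> y * exta \<alpha> y) x * (\<lambda>y. \<chi> y * exta \<alpha> y) y"
  using psi_lin[OF a] unfolding lin_char_iff[OF Sa_subgroup[OF a]] by auto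

lemma resH_lin: "is_linear_character G H (restrict_char H \<chi>)"
  unfolding lin_char_iff[OF H] restrict_char_def using oneK chi1 chim Hc Hm by auto

lemma resH_hom: "restrict_char H \<chi> \<one> = 1"
    "\<And>x y. x \<in> H \<Longrightarrow> y \<in> H \<Longrightarrow> restrict_char H \<chi> (x \<otimes> y) = restrict_char H \<chi> x * restrict_char H \<chi> y"
  using resH_lin unfolding lin_char_iff[OF H] by auto

lemma psi_oneL: "(\<lambda>y. \<chi> y * exta (oneL :: 'a \<Rightarrow> complex) y) = restrict_char TT \<chi>"
proof
  fix y show "\<chi> y * exta (oneL :: 'a \<Rightarrow> complex) y = restrict_char TT \<chi> y"
  proof (cases "y \<in> TT")
    case True
    then obtain l h where lh: "l \<in> L" "h \<in> H" "y = l \<otimes> h" unfolding TT_def by blast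
    have "exta (oneL :: 'a \<Rightarrow> complex) y = 1"
      unfolding lh(3) using exta_val[OF oneL_ch lh(1) lh(2)] stab_oneL lh unfolding oneL_def by simp
    thus ?thesis using True unfolding restrict_char_def by simp
  next
    case False
    hence "y \<notin> Sa (oneL :: 'a \<Rightarrow> complex)" using TT_eq by simp
    thus ?thesis using False exta_out unfolding restrict_char_def by simp
  qed
qed

lemma compl_ineq:
  fixes n :: "'a set \<Rightarrow> ('a \<Rightarrow> complex) \<Rightarrow> int"
  assumes ACH1: "\<And>K \<phi>1 \<phi>2. subgroup K G \<Longrightarrow> is_character G K \<phi>1 \<Longrightarrow> is_character G K \<phi>2 \<Longrightarrow>
                 n K (\<lambda>x. \<phi>1 x + \<phi>2 x) = n K \<phi>1 + n K \<phi>2"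
    and ACH2: "\<And>K \<psi>. subgroup K G \<Longrightarrow> is_character G K \<psi> \<Longrightarrow>
                 n (carrier G) (induce G K \<psi>) = n K \<psi>"
    and ACH3: "\<And>K \<psi>. subgroup K G \<Longrightarrow> is_linear_character G K \<psi> \<Longrightarrow> n K \<psi> \<ge> 0"
  shows "n H (restrict_char H \<chi>) \<ge> n TT (restrict_char TT \<chi>)"
proof -
  let ?A = "chars G H L"
  let ?\<psi> = "\<lambda>\<alpha> y. \<chi> y * exta \<alpha> y"
  let ?I = "\<lambda>\<alpha>. induce G (Sa \<alpha>) (?\<psi> \<alpha>)"
  let ?IH = "induce G H (restrict_char H \<chi>)"
  have ach1: "\<And>\<phi>1 \<phi>2. is_character G (carrier G) \<phi>1 \<Longrightarrow> is_character G (carrier G) \<phi>2 \<Longrightarrow>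
                 n (carrier G) (\<lambda>x. \<phi>1 x + \<phi>2 x) = n (carrier G) \<phi>1 + n (carrier G) \<phi>2"
    using ACH1[OF subgroup_self] .
  have Ichar: "is_character G (carrier G) (?I \<alpha>)" if a: "\<alpha> \<in> ?A" for \<alpha>
    by (rule induce_is_character[OF Sa_subgroup[OF a] fin psi_hom(1)[OF a] psi_hom(2)[OF a]])
  have IHchar: "is_character G (carrier G) ?IH"
    by (rule induce_is_character[OF H fin resH_hom(1) resH_hom(2)])
  have E: "(\<lambda>x. \<Sum>\<alpha>\<in>?A. of_nat (card (Sa \<alpha>)) * ?I \<alpha> x) = (\<lambda>x. of_nat (card ?A * card H) * ?IH x)"
  proof
    fix x show "(\<Sum>\<alpha>\<in>?A. of_nat (card (Sa \<alpha>)) * ?I \<alpha> x) = of_nat (card ?A * card H) * ?IH x"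
    proof (cases "x \<in> carrier G")
      case True thus ?thesis using main_id[OF chi1 chim True] by simp
    next
      case False thus ?thesis unfolding induce_def by simp
    qed
  qed
  have W: "n (carrier G) (\<lambda>x. \<Sum>\<alpha>\<in>?A. of_nat (card (Sa \<alpha>)) * ?I \<alpha> x) = (\<Sum>\<alpha>\<in>?A. of_nat (card (Sa \<alpha>)) * n (carrier G) (?I \<alpha>))"
    using n_wsum[of G "carrier G" n ?A ?I "\<lambda>\<alpha>. card (Sa \<alpha>)", OF ach1 finite_chars Ichar] by blast
  have M: "n (carrier G) (\<lambda>x. of_nat (card ?A * card H) * ?IH x) = of_nat (card ?A * card H) * n (carrier G) ?IH"
    using n_mult[of G "carrier G" n ?IH "card ?A * card H", OF ach1 IHchar] by blast
  have S: "(\<Sum>\<alpha>\<in>?A. int (card (Sa \<alpha>)) * n (Sa \<alpha>) (?\<psi> \<alpha>)) = int (card ?A * card H) * n H (restrict_char H \<chi>)"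
  proof -
    have "(\<Sum>\<alpha>\<in>?A. int (card (Sa \<alpha>)) * n (Sa \<alpha>) (?\<psi> \<alpha>)) = (\<Sum>\<alpha>\<in>?A. of_nat (card (Sa \<alpha>)) * n (carrier G) (?I \<alpha>))"
    proof (rule sum.cong[OF refl])
      fix \<alpha> assume a: "\<alpha> \<in> ?A"
      have "is_character G (Sa \<alpha>) (?\<psi> \<alpha>)" using psi_lin[OF a] unfolding is_linear_character_def by blast
      thus "int (card (Sa \<alpha>)) * n (Sa \<alpha>) (?\<psi> \<alpha>) = of_nat (card (Sa \<alpha>)) * n (carrier G) (?I \<alpha>)"
        using ACH2[OF Sa_subgroup[OF a]] by simp
    qed
    also have "\<dots> = of_nat (card ?A * card H) * n (carrier G) ?IH" using W M E by simp
    also have "\<dots> = int (card ?A * card H) * n H (restrict_char H \<chi>)"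
      using ACH2[OF H] resH_lin unfolding is_linear_character_def by simp
    finally show ?thesis .
  qed
  have nonneg: "0 \<le> int (card (Sa \<alpha>)) * n (Sa \<alpha>) (?\<psi> \<alpha>)" if a: "\<alpha> \<in> ?A" for \<alpha>
    using ACH3[OF Sa_subgroup[OF a] psi_lin[OF a]] by simp
  have "int (card (Sa (oneL :: 'a \<Rightarrow> complex))) * n (Sa oneL) (?\<psi> oneL) \<le> (\<Sum>\<alpha>\<in>?A. int (card (Sa \<alpha>)) * n (Sa \<alpha>) (?\<psi> \<alpha>))"
    by (rule member_le_sum[OF oneL_ch]) (use nonneg finite_chars in auto)
  hence le: "int (card TT) * n TT (restrict_char TT \<chi>) \<le> int (card ?A * card H) * n H (restrict_char H \<chi>)"
    using S TT_eq psi_oneL by simp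
  have cK: "card (H \<inter> L) > 0" using finL oneK card_gt_0_iff by blast
  have "card TT * card (H \<inter> L) = card ?A * card H * card (H \<inter> L)"
    using card_TT card_chars by (simp add: algebra_simps)
  hence cT: "card TT = card ?A * card H" using cK by simp
  have c1: "card ?A > 0" using finite_chars oneL_ch card_gt_0_iff by blast
  have oH: "\<one> \<in> H" using oneK by blast
  have c2: "card H > 0" using finH oH card_gt_0_iff by blast
  have cpos: "card ?A * card H > 0" using c1 c2 by simp
  show ?thesis using le cT cpos by (simp add: mult_le_cancel_left)
qed

end
end

context group begin

lemma Dnormal: "(derived G ^^ i) (carrier G) \<lhd> G"
proof (induction i)
  case 0 thus ?case using normal_self by simp
next
  case (Suc i) thus ?case using derived_is_normal by simp
qed

lemma comm_in_derived: assumes "a \<in> X" "b \<in> X"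
  shows "a \<otimes> b \<otimes> inv a \<otimes> inv b \<in> derived G X"
  unfolding derived_def by (rule generate.incl) (use assms in blast)

lemma main_lemma:
  fixes n :: "'a set \<Rightarrow> ('a \<Rightarrow> complex) \<Rightarrow> int" and \<chi> :: "'a \<Rightarrow> complex"
  assumes fin: "finite (carrier G)" and solv: "solvable G"
    and ACH1: "\<And>K \<phi>1 \<phi>2. subgroup K G \<Longrightarrow> is_character G K \<phi>1 \<Longrightarrow> is_character G K \<phi>2 \<Longrightarrow>
                 n K (\<lambda>x. \<phi>1 x + \<phi>2 x) = n K \<phi>1 + n K \<phi>2"
    and ACH2: "\<And>K \<psi>. subgroup K G \<Longrightarrow> is_character G K \<psi> \<Longrightarrow>
                 n (carrier G) (induce G K \<psi>) = n K \<psi>"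
    and ACH3: "\<And>K \<psi>. subgroup K G \<Longrightarrow> is_linear_character G K \<psi> \<Longrightarrow> n K \<psi> \<ge> 0"
    and chi: "is_linear_character G (carrier G) \<chi>"
  shows "subgroup H G \<Longrightarrow> n H (restrict_char H \<chi>) \<ge> n (carrier G) \<chi>"
proof (induction "card (carrier G) - card H" arbitrary: H rule: less_induct)
  case less
  have chiL: "\<chi> \<one> = 1" "\<And>x y. x \<in> carrier G \<Longrightarrow> y \<in> carrier G \<Longrightarrow> \<chi> (x \<otimes> y) = \<chi> x * \<chi> y"
    "\<And>x. x \<notin> carrier G \<Longrightarrow> \<chi> x = 0"
    using chi unfolding lin_char_iff[OF subgroup_self] by auto
  have Hsub: "H \<subseteq> carrier G" using less.prems subgroup.subset by blast
  show ?case
  proof (cases "H = carrier G")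
    case True
    have "restrict_char H \<chi> = \<chi>" unfolding restrict_char_def True using chiL(3) by auto
    thus ?thesis using True by simp
  next
    case False
    define D where "D = (\<lambda>i. (derived G ^^ i) (carrier G))"
    obtain N where N: "D N = {\<one>}" using solv unfolding solvable_iff_trivial_derived_seq D_def by blast
    have DN: "D N \<subseteq> H" using N less.prems subgroup.one_closed by auto
    have D0: "\<not> D 0 \<subseteq> H" unfolding D_def using False Hsub by auto
    define N0 where "N0 = (LEAST k. D k \<subseteq> H)"
    have N0H: "D N0 \<subseteq> H" unfolding N0_def by (rule LeastI[of "\<lambda>k. D k \<subseteq> H", OF DN])
    have N0pos: "N0 \<noteq> 0" using N0H D0 by auto
    define i where "i = N0 - 1"
    have Si: "Suc i = N0" unfolding i_def using N0pos by simp
    have Di: "\<not> D i \<subseteq> H" unfolding N0_def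
      using not_less_Least[of i "\<lambda>k. D k \<subseteq> H"] Si unfolding N0_def by simp
    have DSi: "D (Suc i) \<subseteq> H" using N0H Si by simp
    let ?L = "D i"
    have Lnorm: "?L \<lhd> G" unfolding D_def by (rule Dnormal)
    have Lsg: "subgroup ?L G" using Lnorm normal_imp_subgroup by blast
    have Lconj: "\<And>h l. h \<in> H \<Longrightarrow> l \<in> ?L \<Longrightarrow> h \<otimes> l \<otimes> inv h \<in> ?L"
      using Lnorm Hsub unfolding normal_inv_iff by blast
    have Lcomm: "\<And>a b. a \<in> ?L \<Longrightarrow> b \<in> ?L \<Longrightarrow> a \<otimes> b \<otimes> inv a \<otimes> inv b \<in> H"
    proof -
      fix a b assume ab: "a \<in> ?L" "b \<in> ?L"
      have "a \<otimes> b \<otimes> inv a \<otimes> inv b \<in> derived G ?L" by (rule comm_in_derived[OF ab])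
      also have "derived G ?L = D (Suc i)" unfolding D_def by simp
      finally show "a \<otimes> b \<otimes> inv a \<otimes> inv b \<in> H" using DSi by blast
    qed
    interpret S: sect G H ?L
      by (intro sect.intro[OF is_group] sect_axioms.intro fin less.prems Lsg Lconj Lcomm)
    have TTsg: "subgroup S.TT G" using S.Sa_subgroup[OF S.oneL_ch] S.TT_eq by simp
    have TTsub: "S.TT \<subseteq> carrier G" using TTsg subgroup.subset by blast
    have HT: "H \<subseteq> S.TT"
    proof
      fix h assume h: "h \<in> H"
      have "h = \<one> \<otimes> h" using h Hsub by auto
      thus "h \<in> S.TT" unfolding S.TT_def using h S.oneK by blast
    qed
    obtain l where l: "l \<in> ?L" "l \<notin> H" using Di by blast
    have lT: "l \<in> S.TT"
    proof -
      have "l = l \<otimes> \<one>" using l S.Lc by simp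
      thus ?thesis unfolding S.TT_def using l S.oneK by blast
    qed
    have lt: "card H < card S.TT"
      by (rule psubset_card_mono[OF finite_subset[OF TTsub fin]]) (use HT lT l in blast)
    have cT: "card S.TT \<le> card (carrier G)" by (rule card_mono[OF fin TTsub])
    have IH: "n S.TT (restrict_char S.TT \<chi>) \<ge> n (carrier G) \<chi>"
      by (rule less.hyps[OF _ TTsg]) (use lt cT in linarith)
    have "n H (restrict_char H \<chi>) \<ge> n S.TT (restrict_char S.TT \<chi>)"
      by (rule S.compl_ineq[OF chiL(1) chiL(2) ACH1 ACH2 ACH3])
    thus ?thesis using IH by linarith
  qed
qed

end

context group begin

lemma hom_norm1:
  fixes \<psi> :: "'a \<Rightarrow> complex"
  assumes S: "subgroup S G" and fin: "finite (carrier G)" and p1: "\<psi> \<one> = 1"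
    and pm: "\<And>x y. x \<in> S \<Longrightarrow> y \<in> S \<Longrightarrow> \<psi> (x \<otimes> y) = \<psi> x * \<psi> y" and x: "x \<in> S"
  shows "cmod (\<psi> x) = 1"
proof -
  have pw: "x [^] (k::nat) \<in> S \<and> \<psi> (x [^] k) = \<psi> x ^ k" for k
  proof (induction k)
    case 0 thus ?case using p1 S subgroup.one_closed by auto
  next
    case (Suc k)
    have "x [^] Suc k = x [^] k \<otimes> x" by simp
    thus ?case using Suc pm[of "x [^] k" x] x subgroup.m_closed[OF S] by auto
  qed
  have xc: "x \<in> carrier G" using x S subgroup.subset by blast
  have o: "order G > 0" using fin order_gt_0_iff_finite by blast
  have "x [^] order G = \<one>" by (rule pow_order_eq_1[OF xc])
  hence "\<psi> x ^ order G = 1" using pw[of "order G"] p1 by simp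
  hence "cmod (\<psi> x ^ order G) = 1" by simp
  hence "cmod (\<psi> x) ^ order G = 1 ^ order G" by (simp add: norm_power)
  thus ?thesis by (rule power_eq_imp_eq_base) (use o in auto)
qed

lemma sum_hom_zero:
  fixes \<beta> :: "'a \<Rightarrow> complex"
  assumes S: "subgroup S G" and fin: "finite (carrier G)"
    and bm: "\<And>x y. x \<in> S \<Longrightarrow> y \<in> S \<Longrightarrow> \<beta> (x \<otimes> y) = \<beta> x * \<beta> y"
    and s0: "s0 \<in> S" "\<beta> s0 \<noteq> 1"
  shows "(\<Sum>s\<in>S. \<beta> s) = 0"
proof -
  have Sc: "\<And>x. x \<in> S \<Longrightarrow> x \<in> carrier G" using S subgroup.subset by blast
  have bij: "bij_betw (\<lambda>x. s0 \<otimes> x) S S"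
  proof (rule bij_betwI[where g="\<lambda>x. inv s0 \<otimes> x"])
    show "(\<lambda>x. s0 \<otimes> x) \<in> S \<rightarrow> S" using s0 subgroup.m_closed[OF S] by blast
    show "(\<lambda>x. inv s0 \<otimes> x) \<in> S \<rightarrow> S" using s0 subgroup.m_closed[OF S] subgroup.m_inv_closed[OF S] by blast
    show "\<And>x. x \<in> S \<Longrightarrow> inv s0 \<otimes> (s0 \<otimes> x) = x" using s0 Sc by (simp add: cancel2)
    show "\<And>x. x \<in> S \<Longrightarrow> s0 \<otimes> (inv s0 \<otimes> x) = x" using s0 Sc by (simp add: cancel1)
  qed
  have "(\<Sum>s\<in>S. \<beta> s) = (\<Sum>s\<in>S. \<beta> (s0 \<otimes> s))"
    using sum.reindex_bij_betw[OF bij, of \<beta>] by simp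
  also have "\<dots> = (\<Sum>s\<in>S. \<beta> s0 * \<beta> s)" by (rule sum.cong) (use bm s0 in auto)
  also have "\<dots> = \<beta> s0 * (\<Sum>s\<in>S. \<beta> s)" by (simp add: sum_distrib_left)
  finally have "(1 - \<beta> s0) * (\<Sum>s\<in>S. \<beta> s) = 0" by (simp add: algebra_simps)
  thus ?thesis using s0 by simp
qed

end

lemma (in group) final_result:
  fixes n :: "'a set \<Rightarrow> ('a \<Rightarrow> complex) \<Rightarrow> int"
    and H :: "'a set" and \<chi> \<phi> :: "'a \<Rightarrow> complex"
  assumes "finite (carrier G)" and "solvable G"
    and ACH1: "\<And>K \<phi>1 \<phi>2. subgroup K G \<Longrightarrow> is_character G K \<phi>1 \<Longrightarrow> is_character G K \<phi>2 \<Longrightarrow>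
                 n K (\<lambda>x. \<phi>1 x + \<phi>2 x) = n K \<phi>1 + n K \<phi>2"
    and ACH2: "\<And>K \<psi>. subgroup K G \<Longrightarrow> is_character G K \<psi> \<Longrightarrow>
                 n (carrier G) (induce G K \<psi>) = n K \<psi>"
    and ACH3: "\<And>K \<psi>. subgroup K G \<Longrightarrow> is_linear_character G K \<psi> \<Longrightarrow> n K \<psi> \<ge> 0"
    and "subgroup H G"
    and "is_linear_character G (carrier G) \<chi>"
    and "is_linear_character G H \<phi>"
  shows "real_of_int (n (carrier G) (induce G H \<phi>))
           \<ge> Re (char_inner H (restrict_char H \<chi>) \<phi>) * real_of_int (n (carrier G) \<chi>)"
proof -
  note fin = assms(1) and Hs = assms(6) and chi = assms(7) and phi = assms(8)
  have chiL: "\<chi> \<one> = 1" "\<And>x y. x \<in> carrier G \<Longrightarrow> y \<in> carrier G \<Longrightarrow> \<chi> (x \<otimes> y) = \<chi> x * \<chi> y"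
    "\<And>x. x \<notin> carrier G \<Longrightarrow> \<chi> x = 0"
    using chi unfolding lin_char_iff[OF subgroup_self] by auto
  have phiL: "\<phi> \<one> = 1" "\<And>x y. x \<in> H \<Longrightarrow> y \<in> H \<Longrightarrow> \<phi> (x \<otimes> y) = \<phi> x * \<phi> y"
    "\<And>x. x \<notin> H \<Longrightarrow> \<phi> x = 0"
    using phi unfolding lin_char_iff[OF Hs] by auto
  have Hc: "\<And>x. x \<in> H \<Longrightarrow> x \<in> carrier G" using Hs subgroup.subset by blast
  have finH: "finite H" using finite_subset[OF _ fin] Hc by blast
  have cH: "card H > 0" using finH Hs subgroup.one_closed card_gt_0_iff by blast
  have E: "n (carrier G) (induce G H \<phi>) = n H \<phi>"
    using ACH2[OF Hs] phi unfolding is_linear_character_def by blast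
  have nH: "n H \<phi> \<ge> 0" by (rule ACH3[OF Hs phi])
  have nG: "n (carrier G) \<chi> \<ge> 0" by (rule ACH3[OF subgroup_self chi])
  have chin: "cmod (\<chi> x) = 1" if "x \<in> carrier G" for x
    by (rule hom_norm1[where \<psi>=\<chi>, OF subgroup_self fin chiL(1) chiL(2) that])
  have phin: "cmod (\<phi> x) = 1" if "x \<in> H" for x
    by (rule hom_norm1[where \<psi>=\<phi>, OF Hs fin phiL(1) phiL(2) that])
  have ip: "char_inner H (restrict_char H \<chi>) \<phi> = (1 / of_nat (card H)) * (\<Sum>h\<in>H. \<chi> h * cnj (\<phi> h))"
    unfolding char_inner_def restrict_char_def by simp
  show ?thesis
  proof (cases "\<forall>h\<in>H. \<phi> h = \<chi> h")
    case True
    have phieq: "\<phi> = restrict_char H \<chi>"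
    proof
      fix x show "\<phi> x = restrict_char H \<chi> x" unfolding restrict_char_def using True phiL(3) by auto
    qed
    have "(\<Sum>h\<in>H. \<chi> h * cnj (\<phi> h)) = (\<Sum>h\<in>H. 1)"
    proof (rule sum.cong[OF refl])
      fix h assume h: "h \<in> H"
      have "\<chi> h * cnj (\<chi> h) = of_real ((cmod (\<chi> h))\<^sup>2)" by (rule complex_norm_square[symmetric])
      thus "\<chi> h * cnj (\<phi> h) = 1" using True h chin[OF Hc[OF h]] by simp
    qed
    hence "char_inner H (restrict_char H \<chi>) \<phi> = 1" unfolding ip using cH by simp
    moreover have "n H (restrict_char H \<chi>) \<ge> n (carrier G) \<chi>"
      by (rule main_lemma[where n=n and \<chi>=\<chi>, OF fin assms(2) ACH1 ACH2 ACH3 chi Hs])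
    ultimately have ci: "char_inner H (restrict_char H \<chi>) \<phi> = 1" and ml: "n H (restrict_char H \<chi>) \<ge> n (carrier G) \<chi>" .
    have "n H \<phi> = n H (restrict_char H \<chi>)" using phieq by (rule arg_cong)
    hence "n (carrier G) (induce G H \<phi>) \<ge> n (carrier G) \<chi>" using E ml by linarith
    thus ?thesis using ci by simp
  next
    case False
    then obtain h0 where h0: "h0 \<in> H" "\<phi> h0 \<noteq> \<chi> h0" by blast
    define \<beta> where "\<beta> = (\<lambda>h. \<chi> h * cnj (\<phi> h))"
    have bm: "\<beta> (x \<otimes> y) = \<beta> x * \<beta> y" if "x \<in> H" "y \<in> H" for x y
      unfolding \<beta>_def using chiL(2)[OF Hc Hc] phiL(2) that by simp
    have pc: "\<phi> h0 * cnj (\<phi> h0) = 1"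
    proof -
      have "\<phi> h0 * cnj (\<phi> h0) = of_real ((cmod (\<phi> h0))\<^sup>2)" by (rule complex_norm_square[symmetric])
      thus ?thesis using phin[OF h0(1)] by simp
    qed
    have b0: "\<beta> h0 \<noteq> 1"
    proof
      assume "\<beta> h0 = 1"
      hence e1: "\<chi> h0 * cnj (\<phi> h0) = 1" unfolding \<beta>_def .
      have "\<chi> h0 = \<chi> h0 * (\<phi> h0 * cnj (\<phi> h0))" using pc by simp
      also have "\<dots> = (\<chi> h0 * cnj (\<phi> h0)) * \<phi> h0" by (simp add: algebra_simps)
      also have "\<dots> = \<phi> h0" using e1 by simp
      finally have "\<chi> h0 = \<phi> h0" .
      thus False using h0 by simp
    qed
    have "(\<Sum>h\<in>H. \<beta> h) = 0" by (rule sum_hom_zero[where \<beta>=\<beta>, OF Hs fin bm h0(1) b0])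
    hence "char_inner H (restrict_char H \<chi>) \<phi> = 0" unfolding ip \<beta>_def by simp
    hence "Re (char_inner H (restrict_char H \<chi>) \<phi>) = 0" by simp
    moreover have "n (carrier G) (induce G H \<phi>) \<ge> 0" using E nH by linarith
    ultimately show ?thesis by simp
  qed
qed


theorem proposition5p2p1:
  fixes G :: "('a, 'b) monoid_scheme"
    and n :: "'a set \<Rightarrow> ('a \<Rightarrow> complex) \<Rightarrow> int"
    and H :: "'a set" and \<chi> \<phi> :: "'a \<Rightarrow> complex"
  assumes "group G" and "finite (carrier G)" and "solvable G"
    and ACH1: "\<And>K \<phi>1 \<phi>2. subgroup K G \<Longrightarrow> is_character G K \<phi>1 \<Longrightarrow> is_character G K \<phi>2 \<Longrightarrow>
                 n K (\<lambda>x. \<phi>1 x + \<phi>2 x) = n K \<phi>1 + n K \<phi>2"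
    and ACH2: "\<And>K \<psi>. subgroup K G \<Longrightarrow> is_character G K \<psi> \<Longrightarrow>
                 n (carrier G) (induce G K \<psi>) = n K \<psi>"
    and ACH3: "\<And>K \<psi>. subgroup K G \<Longrightarrow> is_linear_character G K \<psi> \<Longrightarrow> n K \<psi> \<ge> 0"
    and "subgroup H G"
    and "is_linear_character G (carrier G) \<chi>"
    and "is_linear_character G H \<phi>"
  shows "real_of_int (n (carrier G) (induce G H \<phi>))
           \<ge> Re (char_inner H (restrict_char H \<chi>) \<phi>) * real_of_int (n (carrier G) \<chi>)"
  by (rule group.final_result[where G=G and n=n and H=H and \<chi>=\<chi> and \<phi>=\<phi>, OF assms(1) assms(2) assms(3) ACH1 ACH2 ACH3 assms(7) assms(8) assms(9)])


end
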